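(* Let $\pi,\tau\in S_n$ with $d(\pi,\tau)=t$, and let $\lambda=\lambda(\pi)$, $\mu=\lambda(\tau)$. Then \[\Delta(\lambda,\mu)\le t\sqrt{n/2}.\]
   Context: Permutations are written in one-line notation. For $\pi\in S_n$, $\lambda(\pi)$ denotes the shape of the tableaux associated with $\pi$ by the RSK correspondence. The distance $d(\pi,\tau)$ is the least number of adjacent transpositions $(k,k+1)$, $1\le k\le n-1$, whose successive left multiplication transforms $\pi$ into $\tau$. For partitions $\lambda,\mu$ of $n$ (parts padded with zeros), $\Delta(\lambda,\mu)=\frac12\sum_{i=1}^n|\lambda_i-\mu_i|$. *)

theory Defs
  imports "HOL-Combinatorics.Combinatorics" Complex_Main
begin

(* Permutations of {1..n} are functions nat => nat with  p permutes {1..n};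
   one-line notation of p is the list  map p [1..<n+1]. *)

definition one_line :: "nat \<Rightarrow> (nat \<Rightarrow> nat) \<Rightarrow> nat list" where
  "one_line n p = map p [1..<Suc n]"

fun row_ins :: "nat \<Rightarrow> nat list \<Rightarrow> nat list \<times> nat option" where
  "row_ins x [] = ([x], None)"
| "row_ins x (y # ys) =
     (if x < y then (x # ys, Some y)
      else (case row_ins x ys of (r, b) \<Rightarrow> (y # r, b)))"

(* insertion of x into a tableau given as list of rows (top row first) *)
fun tab_ins :: "nat \<Rightarrow> nat list list \<Rightarrow> nat list list" where
  "tab_ins x [] = [[x]]"
| "tab_ins x (r # rs) =
     (case row_ins x r of
        (r', None) \<Rightarrow> r' # rs
      | (r', Some y) \<Rightarrow> r' # tab_ins y rs)"

definition rsk_P :: "nat list \<Rightarrow> nat list list" where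
  "rsk_P w = foldl (\<lambda>T x. tab_ins x T) [] w"

definition rsk_shape :: "nat \<Rightarrow> (nat \<Rightarrow> nat) \<Rightarrow> nat list" where
  "rsk_shape n p = map length (rsk_P (one_line n p))"

definition part :: "nat list \<Rightarrow> nat \<Rightarrow> nat" where
  "part la i = (if i < length la then la ! i else 0)"

definition Delta :: "nat \<Rightarrow> nat list \<Rightarrow> nat list \<Rightarrow> real" where
  "Delta n la mu = (\<Sum>i<n. \<bar>real (part la i) - real (part mu i)\<bar>) / 2"

definition adj_dist :: "nat \<Rightarrow> (nat \<Rightarrow> nat) \<Rightarrow> (nat \<Rightarrow> nat) \<Rightarrow> nat" where
  "adj_dist n p q = (LEAST m. \<exists>ks. length ks = m \<and> (\<forall>k\<in>set ks. 1 \<le> k \<and> k \<le> n - 1) \<and>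
       foldl (\<lambda>f k. transpose k (Suc k) \<circ> f) p ks = q)"

end

theory Submission
  imports Defs
begin
definition incr :: "nat list \<Rightarrow> nat set \<Rightarrow> bool" where
  "incr w S \<longleftrightarrow> S \<subseteq> set w \<and>
     (\<forall>i j. i < j \<longrightarrow> j < length w \<longrightarrow> w!i \<in> S \<longrightarrow> w!j \<in> S \<longrightarrow> w!i < w!j)"

definition fam :: "nat list \<Rightarrow> nat \<Rightarrow> (nat \<Rightarrow> nat set) \<Rightarrow> bool" where
  "fam w j F \<longleftrightarrow> (\<forall>i<j. incr w (F i)) \<and> (\<forall>i<j. \<forall>i'<j. i \<noteq> i' \<longrightarrow> F i \<inter> F i' = {})"

definition G :: "nat list \<Rightarrow> nat \<Rightarrow> nat" where
  "G w j = Max ((\<lambda>F. card (\<Union>i<j. F i)) ` {F. fam w j F})"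

lemma fam_card_le: "fam w j F \<Longrightarrow> card (\<Union>i<j. F i) \<le> length w"
proof -
  assume "fam w j F"
  then have "(\<Union>i<j. F i) \<subseteq> set w" by (auto simp: fam_def incr_def)
  then have "card (\<Union>i<j. F i) \<le> card (set w)" by (simp add: card_mono)
  also have "\<dots> \<le> length w" by (rule card_length)
  finally show ?thesis .
qed

lemma fam_empty: "fam w j (\<lambda>_. {})"
  by (auto simp: fam_def incr_def)

lemma G_fin: "finite ((\<lambda>F. card (\<Union>i<j. F i)) ` {F. fam w j F})"
proof (rule finite_subset)
  show "((\<lambda>F. card (\<Union>i<j. F i)) ` {F. fam w j F}) \<subseteq> {..length w}"
    using fam_card_le by auto
qed simp

lemma G_upper: "fam w j F \<Longrightarrow> card (\<Union>i<j. F i) \<le> G w j"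
  unfolding G_def by (rule Max_ge[OF G_fin]) auto

lemma G_obtain: "\<exists>F. fam w j F \<and> card (\<Union>i<j. F i) = G w j"
proof -
  have "G w j \<in> ((\<lambda>F. card (\<Union>i<j. F i)) ` {F. fam w j F})"
    unfolding G_def by (rule Max_in[OF G_fin]) (use fam_empty in auto)
  then show ?thesis by auto
qed

lemma G_transfer:
  assumes "\<And>F. fam w1 j F \<Longrightarrow> \<exists>F'. fam w2 j F' \<and> card (\<Union>i<j. F i) \<le> card (\<Union>i<j. F' i) + c"
  shows "G w1 j \<le> G w2 j + c"
proof -
  obtain F where F: "fam w1 j F" "card (\<Union>i<j. F i) = G w1 j" using G_obtain by blast
  obtain F' where "fam w2 j F'" "card (\<Union>i<j. F i) \<le> card (\<Union>i<j. F' i) + c" using assms[OF F(1)] by blast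
  with F(2) G_upper[of w2 j F'] show ?thesis by linarith
qed

lemma incr_subset: "incr w S \<Longrightarrow> T \<subseteq> S \<Longrightarrow> incr w T"
  unfolding incr_def by blast

lemma incr_pos:
  assumes "incr w S" "distinct w" "i < length w" "i' < length w" "w!i \<in> S" "w!i' \<in> S" "w!i < w!i'"
  shows "i < i'"
proof (rule ccontr)
  assume "\<not> i < i'"
  then have "i' < i \<or> i' = i" by auto
  then show False
  proof
    assume "i' < i" then have "w!i' < w!i" using assms unfolding incr_def by blast
    then show False using assms by simp
  next
    assume "i' = i" then show False using assms by simp
  qed
qed

lemma swap_set:
  assumes "length w2 = length w1" "\<forall>i<length w1. w2!i = w1!(transpose p (Suc p) i)" "Suc p < length w1"
  shows "set w2 = set w1"
proof -
  have tr: "\<And>i. i < length w1 \<Longrightarrow> transpose p (Suc p) i < length w1"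
    using assms(3) by (auto simp: transpose_def)
  have "set w2 \<subseteq> set w1"
    using assms tr by (auto simp: in_set_conv_nth) (metis)
  moreover have "set w1 \<subseteq> set w2"
  proof
    fix a assume "a \<in> set w1"
    then obtain i where i: "i < length w1" "w1!i = a" by (auto simp: in_set_conv_nth)
    have "w2 ! (transpose p (Suc p) i) = a" using assms(2) tr[OF i(1)] i by simp
    then show "a \<in> set w2" using tr[OF i(1)] assms(1) by (auto simp: in_set_conv_nth)
  qed
  ultimately show ?thesis by blast
qed

lemma swap_incr:
  assumes "length w2 = length w1" "\<forall>i<length w1. w2!i = w1!(transpose p (Suc p) i)" "Suc p < length w1"
    and "\<not> (w1!p \<in> S \<and> w1!(Suc p) \<in> S)" "incr w1 S"
  shows "incr w2 S"
  unfolding incr_def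
proof (intro conjI allI impI)
  show "S \<subseteq> set w2" using assms swap_set[OF assms(1-3)] unfolding incr_def by blast
next
  fix i j assume ij: "i < j" "j < length w2" "w2!i \<in> S" "w2!j \<in> S"
  let ?t = "transpose p (Suc p)"
  have e: "w2!i = w1!(?t i)" "w2!j = w1!(?t j)" using assms(1,2) ij by auto
  have lt: "?t i < length w1" "?t j < length w1" using assms(1,3) ij by (auto simp: transpose_def)
  show "w2!i < w2!j"
  proof (cases "i = p \<and> j = Suc p")
    case True
    then show ?thesis using assms(4) ij e by auto
  next
    case False
    then have "?t i < ?t j" using ij by (auto simp: transpose_def)
    then show ?thesis using assms(5) ij e lt unfolding incr_def by metis
  qed
qed

locale kswap =
  fixes w1 w2 :: "nat list" and p :: nat
  assumes len: "length w2 = length w1"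
    and nth2: "\<forall>i<length w1. w2!i = w1!(transpose p (Suc p) i)"
    and bound: "Suc p < length w1"
    and dist: "distinct w1"
    and xz: "w1!p < w1!(Suc p)"
begin

abbreviation "x \<equiv> w1!p"
abbreviation "z \<equiv> w1!(Suc p)"

lemma nth1: "\<forall>i<length w2. w1!i = w2!(transpose p (Suc p) i)"
proof (intro allI impI)
  fix i assume "i < length w2"
  then have "transpose p (Suc p) i < length w1" using len bound by (auto simp: transpose_def)
  then show "w1!i = w2!(transpose p (Suc p) i)" using nth2 by simp
qed

lemma w2p: "w2!p = z" "w2!(Suc p) = x" using nth2 bound by auto

lemma G21: "G w2 j \<le> G w1 j"
proof -
  have "G w2 j \<le> G w1 j + 0"
  proof (rule G_transfer)
    fix F assume F: "fam w2 j F"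
    have "fam w1 j F" unfolding fam_def
    proof (intro conjI allI impI)
      fix i assume "i < j"
      then have I: "incr w2 (F i)" using F by (auto simp: fam_def)
      have "\<not> (w2!p \<in> F i \<and> w2!(Suc p) \<in> F i)"
      proof
        assume "w2!p \<in> F i \<and> w2!(Suc p) \<in> F i"
        then have "w2!p < w2!(Suc p)" using I bound len unfolding incr_def by auto
        then show False using w2p xz by simp
      qed
      then show "incr w1 (F i)" using swap_incr[OF len[symmetric] nth1] I bound len by simp
    next
      fix i i' assume "i < j" "i' < j" "i \<noteq> i'"
      then show "F i \<inter> F i' = {}" using F by (auto simp: fam_def)
    qed
    then show "\<exists>F'. fam w1 j F' \<and> card (\<Union>i<j. F i) \<le> card (\<Union>i<j. F' i) + 0" by auto
  qed
  then show ?thesis by simp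
qed

lemma to2: "incr w1 S \<Longrightarrow> \<not> (x \<in> S \<and> z \<in> S) \<Longrightarrow> incr w2 S"
  using swap_incr[OF len nth2 bound] by blast

lemma pos: "incr w1 S \<Longrightarrow> i < length w1 \<Longrightarrow> i' < length w1 \<Longrightarrow> w1!i \<in> S \<Longrightarrow> w1!i' \<in> S
   \<Longrightarrow> w1!i < w1!i' \<Longrightarrow> i < i'"
  using incr_pos dist by blast

lemma fam_fin: "fam w1 j F \<Longrightarrow> i < j \<Longrightarrow> finite (F i)"
  unfolding fam_def incr_def by (meson finite_set finite_subset)

lemma easy_case:
  assumes "fam w1 j F" "\<forall>i<j. \<not> (x \<in> F i \<and> z \<in> F i)"
  shows "fam w2 j F"
  using assms to2 unfolding fam_def by blast

end

context kswap begin

lemma move1: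
  assumes q: "p = Suc q" and yv: "x < w1!q" "w1!q < z"
  shows "G w1 j \<le> G w2 j"
proof -
  let ?y = "w1!q"
  have qlen: "q < length w1" using bound q by simp
  have "G w1 j \<le> G w2 j + 0"
  proof (rule G_transfer)
    fix F assume F: "fam w1 j F"
    have inc: "\<And>i. i < j \<Longrightarrow> incr w1 (F i)" using F by (auto simp: fam_def)
    have dis: "\<And>i i'. i < j \<Longrightarrow> i' < j \<Longrightarrow> i \<noteq> i' \<Longrightarrow> F i \<inter> F i' = {}" using F by (auto simp: fam_def)
    show "\<exists>F'. fam w2 j F' \<and> card (\<Union>i<j. F i) \<le> card (\<Union>i<j. F' i) + 0"
    proof (cases "\<forall>i<j. \<not> (x \<in> F i \<and> z \<in> F i)")
      case True then show ?thesis using easy_case[OF F] by auto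
    next
      case False
      then obtain i0 where i0: "i0 < j" "x \<in> F i0" "z \<in> F i0" by auto
      define C where "C = F i0"
      have Cinc: "incr w1 C" using inc i0 C_def by simp
      have others: "\<And>i. i < j \<Longrightarrow> i \<noteq> i0 \<Longrightarrow> x \<notin> F i \<and> z \<notin> F i"
        using dis i0 by blast
      have Cmid: "\<And>c. c \<in> C \<Longrightarrow> c \<le> x \<or> z \<le> c"
      proof (rule ccontr)
        fix c assume c: "c \<in> C" "\<not> (c \<le> x \<or> z \<le> c)"
        have "c \<in> set w1" using Cinc c unfolding incr_def by auto
        then obtain k where k: "k < length w1" "w1!k = c" by (auto simp: in_set_conv_nth)
        have "p < k" using pos[OF Cinc, of p k] bound k c i0 C_def by auto
        moreover have "k < Suc p" using pos[OF Cinc, of k "Suc p"] bound k c i0 C_def by auto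
        ultimately show False by simp
      qed
      show ?thesis
      proof (cases "\<exists>i1<j. ?y \<in> F i1")
        case True
        then obtain i1 where i1: "i1 < j" "?y \<in> F i1" by auto
        define D where "D = F i1"
        have Dinc: "incr w1 D" using inc i1 D_def by simp
        have "i1 \<noteq> i0"
        proof
          assume "i1 = i0"
          then have "?y < x" using Cinc i1 i0 C_def bound q unfolding incr_def by auto
          then show False using yv by simp
        qed
        have CD: "C \<inter> D = {}" using dis i0 i1 \<open>i1 \<noteq> i0\<close> C_def D_def by blast
        define Cn where "Cn = {c\<in>C. c \<le> x} \<union> {d\<in>D. ?y < d}"
        define Dn where "Dn = {d\<in>D. d \<le> ?y} \<union> {c\<in>C. z \<le> c}"
        have Cn_inc: "incr w1 Cn"
          unfolding incr_def
        proof (intro conjI allI impI)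
          show "Cn \<subseteq> set w1" using Cinc Dinc unfolding Cn_def incr_def by blast
        next
          fix i i' assume ii: "i < i'" "i' < length w1" "w1!i \<in> Cn" "w1!i' \<in> Cn"
          show "w1!i < w1!i'"
          proof (cases "w1!i \<in> C")
            case aC: True
            show ?thesis
            proof (cases "w1!i' \<in> C")
              case True then show ?thesis using Cinc ii aC unfolding incr_def by blast
            next
              case False then show ?thesis using ii aC yv CD unfolding Cn_def by auto
            qed
          next
            case aD: False
            then have a: "w1!i \<in> D" "?y < w1!i" using ii unfolding Cn_def by auto
            have "q < i" using pos[OF Dinc, of q i] a ii qlen i1 D_def by auto
            show ?thesis
            proof (cases "w1!i' \<in> C")
              case bC: True
              then have b: "w1!i' \<le> x" using ii CD a unfolding Cn_def by auto
              show ?thesis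
              proof (cases "w1!i' = x")
                case True
                then have "i' = p" using dist ii bound nth_eq_iff_index_eq by (metis Suc_lessD)
                then show ?thesis using \<open>q < i\<close> ii q by simp
              next
                case False
                then have "i' < p" using pos[OF Cinc, of i' p] b bC ii bound i0 C_def by auto
                then show ?thesis using \<open>q < i\<close> ii q by simp
              qed
            next
              case False
              then have "w1!i' \<in> D" using ii unfolding Cn_def by auto
              then show ?thesis using Dinc ii a unfolding incr_def by blast
            qed
          qed
        qed
        have Dn_inc: "incr w1 Dn"
          unfolding incr_def
        proof (intro conjI allI impI)
          show "Dn \<subseteq> set w1" using Cinc Dinc unfolding Dn_def incr_def by blast
        next
          fix i i' assume ii: "i < i'" "i' < length w1" "w1!i \<in> Dn" "w1!i' \<in> Dn"
          show "w1!i < w1!i'"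
          proof (cases "w1!i \<in> D")
            case aD: True
            show ?thesis
            proof (cases "w1!i' \<in> D")
              case True then show ?thesis using Dinc ii aD unfolding incr_def by blast
            next
              case False then show ?thesis using ii aD yv CD unfolding Dn_def by auto
            qed
          next
            case aC: False
            then have a: "w1!i \<in> C" "z \<le> w1!i" using ii unfolding Dn_def by auto
            have "Suc p \<le> i"
            proof (cases "w1!i = z")
              case True then show ?thesis using dist ii bound nth_eq_iff_index_eq
                by (metis dual_order.refl order.strict_trans)
            next
              case False then show ?thesis using pos[OF Cinc, of "Suc p" i] a ii bound i0 C_def by auto
            qed
            show ?thesis
            proof (cases "w1!i' \<in> D")
              case bD: True
              then have b: "w1!i' \<le> ?y" using ii CD a unfolding Dn_def by auto
              have "i' \<le> q"
              proof (cases "w1!i' = ?y")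
                case True then show ?thesis using dist ii qlen nth_eq_iff_index_eq by (metis order.refl)
              next
                case False then show ?thesis using pos[OF Dinc, of i' q] b bD ii qlen i1 D_def by auto
              qed
              then show ?thesis using \<open>Suc p \<le> i\<close> ii q by simp
            next
              case False
              then have "w1!i' \<in> C" using ii unfolding Dn_def by auto
              then show ?thesis using Cinc ii a unfolding incr_def by blast
            qed
          qed
        qed
        define F' where "F' = F(i0 := Cn, i1 := Dn)"
        have Cn_nb: "\<not> (x \<in> Cn \<and> z \<in> Cn)" using xz CD i0 C_def unfolding Cn_def by auto
        have Dn_nb: "\<not> (x \<in> Dn \<and> z \<in> Dn)" using xz CD i0 C_def unfolding Dn_def by auto
        have CnDn: "Cn \<union> Dn = C \<union> D" using Cmid yv unfolding Cn_def Dn_def by auto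
        have CnDn_dis: "Cn \<inter> Dn = {}" using CD xz yv unfolding Cn_def Dn_def by auto
        have fam2: "fam w2 j F'"
          unfolding fam_def
        proof (intro conjI allI impI)
          fix i assume "i < j"
          show "incr w2 (F' i)"
          proof (cases "i = i1")
            case True then show ?thesis using to2[OF Dn_inc Dn_nb] F'_def by simp
          next
            case n1: False
            show ?thesis
            proof (cases "i = i0")
              case True then show ?thesis using to2[OF Cn_inc Cn_nb] F'_def n1 by simp
            next
              case False then show ?thesis using to2[OF inc[OF \<open>i<j\<close>]] others[OF \<open>i<j\<close>] F'_def n1 by simp
            qed
          qed
        next
          fix i i' assume ii: "i < j" "i' < j" "i \<noteq> i'"
          have sub: "Cn \<subseteq> C \<union> D" "Dn \<subseteq> C \<union> D" using CnDn by auto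
          have oth: "\<And>k. k < j \<Longrightarrow> k \<noteq> i0 \<Longrightarrow> k \<noteq> i1 \<Longrightarrow> F k \<inter> (C \<union> D) = {}"
            using dis i0 i1 C_def D_def by blast
          show "F' i \<inter> F' i' = {}"
            using ii CnDn_dis sub oth[of i] oth[of i'] dis[of i i'] \<open>i1 \<noteq> i0\<close>
            unfolding F'_def by (auto simp: fun_upd_def) blast+
        qed
        have "(\<Union>i<j. F' i) = (\<Union>i<j. F i)"
        proof -
          have "(\<Union>i<j. F' i) = (\<Union>i\<in>{..<j}-{i0,i1}. F i) \<union> (Cn \<union> Dn)"
            using i0 i1 \<open>i1 \<noteq> i0\<close> unfolding F'_def by (auto simp: fun_upd_def split: if_splits)
          also have "\<dots> = (\<Union>i\<in>{..<j}-{i0,i1}. F i) \<union> (C \<union> D)" using CnDn by simp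
          also have "\<dots> = (\<Union>i<j. F i)" using i0 i1 unfolding C_def D_def by auto
          finally show ?thesis .
        qed
        then show ?thesis using fam2 by auto
      next
        case False
        then have ny: "\<And>i. i < j \<Longrightarrow> ?y \<notin> F i" by auto
        define Cn where "Cn = insert ?y (C - {x})"
        have Cn_inc: "incr w1 Cn"
          unfolding incr_def
        proof (intro conjI allI impI)
          show "Cn \<subseteq> set w1" using Cinc qlen unfolding Cn_def incr_def by auto
        next
          fix i i' assume ii: "i < i'" "i' < length w1" "w1!i \<in> Cn" "w1!i' \<in> Cn"
          show "w1!i < w1!i'"
          proof (cases "w1!i = ?y")
            case True
            then have "i = q" using dist ii qlen nth_eq_iff_index_eq by (metis order.strict_trans)
            have "w1!i' \<noteq> ?y" using dist ii \<open>i = q\<close> nth_eq_iff_index_eq qlen by (metis less_irrefl)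
            then have b: "w1!i' \<in> C" "w1!i' \<noteq> x" using ii True unfolding Cn_def by auto
            have "i' \<noteq> p" using b by auto
            then have "Suc p \<le> i'" using \<open>i = q\<close> ii q by simp
            then have "z \<le> w1!i'"
              using Cinc b ii i0 C_def unfolding incr_def
              by (metis le_eq_less_or_eq order.refl)
            then show ?thesis using True yv by simp
          next
            case False
            then have a: "w1!i \<in> C" "w1!i \<noteq> x" using ii unfolding Cn_def by auto
            show ?thesis
            proof (cases "w1!i' = ?y")
              case True
              then have "i' = q" using dist ii qlen nth_eq_iff_index_eq by metis
              then have "i < p" using ii q by simp
              then have "w1!i < x" using Cinc a ii bound i0 C_def unfolding incr_def
                by (metis Suc_lessD)
              then show ?thesis using True yv by simp
            next
              case False
              then have "w1!i' \<in> C" using ii unfolding Cn_def by auto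
              then show ?thesis using Cinc ii a unfolding incr_def by blast
            qed
          qed
        qed
        have Cn_nb: "\<not> (x \<in> Cn \<and> z \<in> Cn)" using yv unfolding Cn_def by auto
        define F' where "F' = F(i0 := Cn)"
        have fam2: "fam w2 j F'"
          unfolding fam_def
        proof (intro conjI allI impI)
          fix i assume "i < j"
          show "incr w2 (F' i)"
          proof (cases "i = i0")
            case True then show ?thesis using to2[OF Cn_inc Cn_nb] F'_def by simp
          next
            case False then show ?thesis using to2[OF inc[OF \<open>i<j\<close>]] others[OF \<open>i<j\<close>] F'_def by simp
          qed
        next
          fix i i' assume ii: "i < j" "i' < j" "i \<noteq> i'"
          show "F' i \<inter> F' i' = {}"
            using ii dis[of i i'] dis[of i0 i] dis[of i0 i'] ny unfolding F'_def Cn_def C_def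
            by (auto simp: fun_upd_def)
        qed
        have U: "(\<Union>i<j. F' i) = insert ?y ((\<Union>i<j. F i) - {x})"
          using i0 others ny unfolding F'_def Cn_def C_def by (auto simp: fun_upd_def split: if_splits)
        have fin: "finite (\<Union>i<j. F i)" using fam_fin[OF F] by auto
        have xin: "x \<in> (\<Union>i<j. F i)" using i0 by auto
        have ynot: "?y \<notin> (\<Union>i<j. F i)" using ny by auto
        have "card (\<Union>i<j. F' i) = card (\<Union>i<j. F i)"
        proof -
          have "card (\<Union>i<j. F i) > 0" using fin xin card_gt_0_iff by blast
          then show ?thesis unfolding U using fin xin ynot by (simp add: card_insert_if card_Diff_singleton)
        qed
        then show ?thesis using fam2 by auto
      qed
    qed
  qed
  then show ?thesis by simp
qed

lemma move2:
  assumes q: "q = Suc (Suc p)" "q < length w1" and yv: "x < w1!q" "w1!q < z"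
  shows "G w1 j \<le> G w2 j"
proof -
  let ?y = "w1!q"
  have qlen: "q < length w1" using q by simp
  have "G w1 j \<le> G w2 j + 0"
  proof (rule G_transfer)
    fix F assume F: "fam w1 j F"
    have inc: "\<And>i. i < j \<Longrightarrow> incr w1 (F i)" using F by (auto simp: fam_def)
    have dis: "\<And>i i'. i < j \<Longrightarrow> i' < j \<Longrightarrow> i \<noteq> i' \<Longrightarrow> F i \<inter> F i' = {}" using F by (auto simp: fam_def)
    show "\<exists>F'. fam w2 j F' \<and> card (\<Union>i<j. F i) \<le> card (\<Union>i<j. F' i) + 0"
    proof (cases "\<forall>i<j. \<not> (x \<in> F i \<and> z \<in> F i)")
      case True then show ?thesis using easy_case[OF F] by auto
    next
      case False
      then obtain i0 where i0: "i0 < j" "x \<in> F i0" "z \<in> F i0" by auto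
      define C where "C = F i0"
      have Cinc: "incr w1 C" using inc i0 C_def by simp
      have others: "\<And>i. i < j \<Longrightarrow> i \<noteq> i0 \<Longrightarrow> x \<notin> F i \<and> z \<notin> F i"
        using dis i0 by blast
      have Cmid: "\<And>c. c \<in> C \<Longrightarrow> c \<le> x \<or> z \<le> c"
      proof (rule ccontr)
        fix c assume c: "c \<in> C" "\<not> (c \<le> x \<or> z \<le> c)"
        have "c \<in> set w1" using Cinc c unfolding incr_def by auto
        then obtain k where k: "k < length w1" "w1!k = c" by (auto simp: in_set_conv_nth)
        have "p < k" using pos[OF Cinc, of p k] bound k c i0 C_def by auto
        moreover have "k < Suc p" using pos[OF Cinc, of k "Suc p"] bound k c i0 C_def by auto
        ultimately show False by simp
      qed
      show ?thesis
      proof (cases "\<exists>i1<j. ?y \<in> F i1")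
        case True
        then obtain i1 where i1: "i1 < j" "?y \<in> F i1" by auto
        define D where "D = F i1"
        have Dinc: "incr w1 D" using inc i1 D_def by simp
        have "i1 \<noteq> i0"
        proof
          assume "i1 = i0"
          then have "z < ?y" using Cinc i1 i0 C_def bound q unfolding incr_def by auto
          then show False using yv by simp
        qed
        have CD: "C \<inter> D = {}" using dis i0 i1 \<open>i1 \<noteq> i0\<close> C_def D_def by blast
        define Cn where "Cn = {d\<in>D. d < ?y} \<union> {c\<in>C. z \<le> c}"
        define Dn where "Dn = {c\<in>C. c \<le> x} \<union> {d\<in>D. ?y \<le> d}"
        have Cn_inc: "incr w1 Cn"
          unfolding incr_def
        proof (intro conjI allI impI)
          show "Cn \<subseteq> set w1" using Cinc Dinc unfolding Cn_def incr_def by blast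
        next
          fix i i' assume ii: "i < i'" "i' < length w1" "w1!i \<in> Cn" "w1!i' \<in> Cn"
          show "w1!i < w1!i'"
          proof (cases "w1!i \<in> D")
            case aD: True
            show ?thesis
            proof (cases "w1!i' \<in> D")
              case True then show ?thesis using Dinc ii aD unfolding incr_def by blast
            next
              case False then show ?thesis using ii aD yv CD unfolding Cn_def by auto
            qed
          next
            case aC: False
            then have a: "w1!i \<in> C" "z \<le> w1!i" using ii unfolding Cn_def by auto
            have "Suc p \<le> i"
            proof (cases "w1!i = z")
              case True then show ?thesis using dist ii bound nth_eq_iff_index_eq
                by (metis dual_order.refl order.strict_trans)
            next
              case False then show ?thesis using pos[OF Cinc, of "Suc p" i] a ii bound i0 C_def by auto
            qed
            show ?thesis
            proof (cases "w1!i' \<in> D")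
              case bD: True
              then have b: "w1!i' < ?y" using ii CD a unfolding Cn_def by auto
              have "i' < q" using pos[OF Dinc, of i' q] b bD ii qlen i1 D_def by auto
              moreover have "i' \<noteq> Suc p" using bD CD i0 C_def by auto
              ultimately show ?thesis using \<open>Suc p \<le> i\<close> ii q by simp
            next
              case False
              then have "w1!i' \<in> C" using ii unfolding Cn_def by auto
              then show ?thesis using Cinc ii a unfolding incr_def by blast
            qed
          qed
        qed
        have Dn_inc: "incr w1 Dn"
          unfolding incr_def
        proof (intro conjI allI impI)
          show "Dn \<subseteq> set w1" using Cinc Dinc unfolding Dn_def incr_def by blast
        next
          fix i i' assume ii: "i < i'" "i' < length w1" "w1!i \<in> Dn" "w1!i' \<in> Dn"
          show "w1!i < w1!i'"
          proof (cases "w1!i \<in> C")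
            case aC: True
            show ?thesis
            proof (cases "w1!i' \<in> C")
              case True then show ?thesis using Cinc ii aC unfolding incr_def by blast
            next
              case False then show ?thesis using ii aC yv CD unfolding Dn_def by auto
            qed
          next
            case aD: False
            then have a: "w1!i \<in> D" "?y \<le> w1!i" using ii unfolding Dn_def by auto
            have "q \<le> i"
            proof (cases "w1!i = ?y")
              case True then show ?thesis using dist ii qlen nth_eq_iff_index_eq
                by (metis dual_order.refl order.strict_trans)
            next
              case False then show ?thesis using pos[OF Dinc, of q i] a ii qlen i1 D_def by auto
            qed
            show ?thesis
            proof (cases "w1!i' \<in> C")
              case bC: True
              then have b: "w1!i' \<le> x" using ii CD a unfolding Dn_def by auto
              have "i' \<le> p"
              proof (cases "w1!i' = x")
                case True then show ?thesis using dist ii bound nth_eq_iff_index_eq by (metis order.refl Suc_lessD)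
              next
                case False then show ?thesis using pos[OF Cinc, of i' p] b bC ii bound i0 C_def by auto
              qed
              then show ?thesis using \<open>q \<le> i\<close> ii q by simp
            next
              case False
              then have "w1!i' \<in> D" using ii unfolding Dn_def by auto
              then show ?thesis using Dinc ii a unfolding incr_def by blast
            qed
          qed
        qed
        define F' where "F' = F(i0 := Cn, i1 := Dn)"
        have Cn_nb: "\<not> (x \<in> Cn \<and> z \<in> Cn)" using xz CD i0 C_def unfolding Cn_def by auto
        have Dn_nb: "\<not> (x \<in> Dn \<and> z \<in> Dn)" using xz CD i0 C_def unfolding Dn_def by auto
        have CnDn: "Cn \<union> Dn = C \<union> D" using Cmid yv unfolding Cn_def Dn_def by auto
        have CnDn_dis: "Cn \<inter> Dn = {}" using CD xz yv unfolding Cn_def Dn_def by auto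
        have fam2: "fam w2 j F'"
          unfolding fam_def
        proof (intro conjI allI impI)
          fix i assume "i < j"
          show "incr w2 (F' i)"
          proof (cases "i = i1")
            case True then show ?thesis using to2[OF Dn_inc Dn_nb] F'_def by simp
          next
            case n1: False
            show ?thesis
            proof (cases "i = i0")
              case True then show ?thesis using to2[OF Cn_inc Cn_nb] F'_def n1 by simp
            next
              case False then show ?thesis using to2[OF inc[OF \<open>i<j\<close>]] others[OF \<open>i<j\<close>] F'_def n1 by simp
            qed
          qed
        next
          fix i i' assume ii: "i < j" "i' < j" "i \<noteq> i'"
          have sub: "Cn \<subseteq> C \<union> D" "Dn \<subseteq> C \<union> D" using CnDn by auto
          have oth: "\<And>k. k < j \<Longrightarrow> k \<noteq> i0 \<Longrightarrow> k \<noteq> i1 \<Longrightarrow> F k \<inter> (C \<union> D) = {}"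
            using dis i0 i1 C_def D_def by blast
          show "F' i \<inter> F' i' = {}"
            using ii CnDn_dis sub oth[of i] oth[of i'] dis[of i i'] \<open>i1 \<noteq> i0\<close>
            unfolding F'_def by (auto simp: fun_upd_def) blast+
        qed
        have "(\<Union>i<j. F' i) = (\<Union>i<j. F i)"
        proof -
          have "(\<Union>i<j. F' i) = (\<Union>i\<in>{..<j}-{i0,i1}. F i) \<union> (Cn \<union> Dn)"
            using i0 i1 \<open>i1 \<noteq> i0\<close> unfolding F'_def by (auto simp: fun_upd_def split: if_splits)
          also have "\<dots> = (\<Union>i\<in>{..<j}-{i0,i1}. F i) \<union> (C \<union> D)" using CnDn by simp
          also have "\<dots> = (\<Union>i<j. F i)" using i0 i1 unfolding C_def D_def by auto
          finally show ?thesis .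
        qed
        then show ?thesis using fam2 by auto
      next
        case False
        then have ny: "\<And>i. i < j \<Longrightarrow> ?y \<notin> F i" by auto
        define Cn where "Cn = insert ?y (C - {z})"
        have Cn_inc: "incr w1 Cn"
          unfolding incr_def
        proof (intro conjI allI impI)
          show "Cn \<subseteq> set w1" using Cinc qlen unfolding Cn_def incr_def by auto
        next
          fix i i' assume ii: "i < i'" "i' < length w1" "w1!i \<in> Cn" "w1!i' \<in> Cn"
          show "w1!i < w1!i'"
          proof (cases "w1!i = ?y")
            case True
            then have "i = q" using dist ii qlen nth_eq_iff_index_eq by (metis order.strict_trans)
            have "w1!i' \<noteq> ?y" using dist ii \<open>i = q\<close> nth_eq_iff_index_eq qlen by (metis less_irrefl)
            then have b: "w1!i' \<in> C" "w1!i' \<noteq> z" using ii True unfolding Cn_def by auto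
            have "Suc p < i'" using \<open>i = q\<close> ii q by simp
            then have "z < w1!i'"
              using Cinc b ii i0 C_def unfolding incr_def by blast
            then show ?thesis using True yv by simp
          next
            case False
            then have a: "w1!i \<in> C" "w1!i \<noteq> z" using ii unfolding Cn_def by auto
            show ?thesis
            proof (cases "w1!i' = ?y")
              case True
              then have "i' = q" using dist ii qlen nth_eq_iff_index_eq by metis
              moreover have "i \<noteq> Suc p" using a by auto
              ultimately have "i \<le> p" using ii q by simp
              then have "w1!i \<le> x" using Cinc a ii bound i0 C_def unfolding incr_def
                by (metis Suc_lessD le_eq_less_or_eq order.refl)
              then show ?thesis using True yv by simp
            next
              case False
              then have "w1!i' \<in> C" using ii unfolding Cn_def by auto
              then show ?thesis using Cinc ii a unfolding incr_def by blast
            qed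
          qed
        qed
        have Cn_nb: "\<not> (x \<in> Cn \<and> z \<in> Cn)" using yv unfolding Cn_def by auto
        define F' where "F' = F(i0 := Cn)"
        have fam2: "fam w2 j F'"
          unfolding fam_def
        proof (intro conjI allI impI)
          fix i assume "i < j"
          show "incr w2 (F' i)"
          proof (cases "i = i0")
            case True then show ?thesis using to2[OF Cn_inc Cn_nb] F'_def by simp
          next
            case False then show ?thesis using to2[OF inc[OF \<open>i<j\<close>]] others[OF \<open>i<j\<close>] F'_def by simp
          qed
        next
          fix i i' assume ii: "i < j" "i' < j" "i \<noteq> i'"
          show "F' i \<inter> F' i' = {}"
            using ii dis[of i i'] dis[of i0 i] dis[of i0 i'] ny unfolding F'_def Cn_def C_def
            by (auto simp: fun_upd_def)
        qed
        have U: "(\<Union>i<j. F' i) = insert ?y ((\<Union>i<j. F i) - {z})"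
          using i0 others ny unfolding F'_def Cn_def C_def by (auto simp: fun_upd_def split: if_splits)
        have fin: "finite (\<Union>i<j. F i)" using fam_fin[OF F] by auto
        have xin: "z \<in> (\<Union>i<j. F i)" using i0 by auto
        have ynot: "?y \<notin> (\<Union>i<j. F i)" using ny by auto
        have "card (\<Union>i<j. F' i) = card (\<Union>i<j. F i)"
        proof -
          have "card (\<Union>i<j. F i) > 0" using fin xin card_gt_0_iff by blast
          then show ?thesis unfolding U using fin xin ynot by (simp add: card_insert_if card_Diff_singleton)
        qed
        then show ?thesis using fam2 by auto
      qed
    qed
  qed
  then show ?thesis by simp
qed

end

lemma swap_nth:
  assumes "i < length (u @ [a,b] @ v)"
  shows "(u@[b,a]@v)!i = (u@[a,b]@v)!(transpose (length u) (Suc (length u)) i)"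
proof -
  consider "i < length u" | "i = length u" | "i = Suc (length u)" | "Suc (length u) < i" by linarith
  then show ?thesis
  proof cases
    case 1 then show ?thesis by (simp add: nth_append transpose_def)
  next
    case 2 then show ?thesis by (simp add: nth_append transpose_def)
  next
    case 3 then show ?thesis by (simp add: nth_append transpose_def)
  next
    case 4
    then have "i - length u = Suc (Suc (i - length u - 2))" by simp
    then show ?thesis using 4 by (simp add: nth_append transpose_def)
  qed
qed

lemma kswap_inst:
  assumes "distinct (u@[a,b]@v)" "a < b"
  shows "kswap (u@[a,b]@v) (u@[b,a]@v) (length u)"
proof unfold_locales
  show "\<forall>i<length (u @ [a, b] @ v). (u @ [b, a] @ v) ! i = (u @ [a, b] @ v) ! transpose (length u) (Suc (length u)) i"
    using swap_nth[of _ u a b v] by blast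
  have "(u @ [a, b] @ v) ! length u = a" "(u @ [a, b] @ v) ! Suc (length u) = b"
    by (simp_all add: nth_append)
  then show "(u @ [a, b] @ v) ! length u < (u @ [a, b] @ v) ! Suc (length u)" using assms by simp
qed (use assms in auto)

lemma G_k1:
  assumes "distinct (u@[y,x,z]@v)" "x < y" "y < z"
  shows "G (u@[y,x,z]@v) j = G (u@[y,z,x]@v) j"
proof -
  have e1: "u@[y,x,z]@v = (u@[y])@[x,z]@v" "u@[y,z,x]@v = (u@[y])@[z,x]@v" by simp_all
  interpret kswap "(u@[y])@[x,z]@v" "(u@[y])@[z,x]@v" "length (u@[y])"
    using kswap_inst[of "u@[y]" x z v] assms by simp
  have "G ((u@[y])@[x,z]@v) j \<le> G ((u@[y])@[z,x]@v) j"
    by (rule move1[of "length u"]) (use assms in \<open>simp_all add: nth_append\<close>)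
  moreover have "G ((u@[y])@[z,x]@v) j \<le> G ((u@[y])@[x,z]@v) j" by (rule G21)
  ultimately show ?thesis using e1 by simp
qed

lemma G_k2:
  assumes "distinct (u@[x,z,y]@v)" "x < y" "y < z"
  shows "G (u@[x,z,y]@v) j = G (u@[z,x,y]@v) j"
proof -
  have e1: "u@[x,z,y]@v = u@[x,z]@(y#v)" "u@[z,x,y]@v = u@[z,x]@(y#v)" by simp_all
  interpret kswap "u@[x,z]@(y#v)" "u@[z,x]@(y#v)" "length u"
    using kswap_inst[of u x z "y#v"] assms by simp
  have "G (u@[x,z]@(y#v)) j \<le> G (u@[z,x]@(y#v)) j"
    by (rule move2[of "Suc (Suc (length u))"]) (use assms in \<open>simp_all add: nth_append\<close>)
  moreover have "G (u@[z,x]@(y#v)) j \<le> G (u@[x,z]@(y#v)) j" by (rule G21)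
  ultimately show ?thesis using e1 by simp
qed

inductive km :: "nat list \<Rightarrow> nat list \<Rightarrow> bool" where
  k1: "x < y \<Longrightarrow> y < z \<Longrightarrow> km (u@[y,x,z]@v) (u@[y,z,x]@v)"
| k1': "x < y \<Longrightarrow> y < z \<Longrightarrow> km (u@[y,z,x]@v) (u@[y,x,z]@v)"
| k2: "x < y \<Longrightarrow> y < z \<Longrightarrow> km (u@[x,z,y]@v) (u@[z,x,y]@v)"
| k2': "x < y \<Longrightarrow> y < z \<Longrightarrow> km (u@[z,x,y]@v) (u@[x,z,y]@v)"

lemma km_G: "km w w' \<Longrightarrow> distinct w \<Longrightarrow> G w j = G w' j \<and> distinct w'"
proof (induction rule: km.induct)
  case (k1 x y z u v) then show ?case using G_k1[of u y x z v j] by auto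
next
  case (k1' x y z u v)
  then have "distinct (u@[y,x,z]@v)" by auto
  then show ?case using G_k1[of u y x z v j] k1' by auto
next
  case (k2 x y z u v) then show ?case using G_k2[of u x z y v j] by auto
next
  case (k2' x y z u v)
  then have "distinct (u@[x,z,y]@v)" by auto
  then show ?case using G_k2[of u x z y v j] k2' by auto
qed

lemma km_set: "km w w' \<Longrightarrow> set w' = set w"
  by (induction rule: km.induct) auto

lemma km_ctx: "km w w' \<Longrightarrow> km (a@w@b) (a@w'@b)"
proof (induction rule: km.induct)
  case (k1 x y z u v) then show ?case using km.k1[of x y z "a@u" "v@b"] by simp
next
  case (k1' x y z u v) then show ?case using km.k1'[of x y z "a@u" "v@b"] by simp
next
  case (k2 x y z u v) then show ?case using km.k2[of x y z "a@u" "v@b"] by simp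
next
  case (k2' x y z u v) then show ?case using km.k2'[of x y z "a@u" "v@b"] by simp
qed

abbreviation knuth where "knuth \<equiv> km\<^sup>*\<^sup>*"

lemma knuth_G: "knuth w w' \<Longrightarrow> distinct w \<Longrightarrow> G w j = G w' j \<and> distinct w'"
  by (induction rule: rtranclp_induct) (auto dest: km_G)

lemma knuth_set: "knuth w w' \<Longrightarrow> set w' = set w"
  by (induction rule: rtranclp_induct) (auto dest: km_set)

lemma knuth_ctx: "knuth w w' \<Longrightarrow> knuth (a@w@b) (a@w'@b)"
proof (induction rule: rtranclp_induct)
  case base then show ?case by simp
next
  case (step y z) then show ?case using km_ctx
    by (meson rtranclp.rtrancl_into_rtrancl)
qed

lemma row_ins_None:
  "row_ins x r = (r', None) \<Longrightarrow> r' = r @ [x] \<and> (\<forall>e\<in>set r. \<not> x < e)"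
  by (induction x r arbitrary: r' rule: row_ins.induct) (auto split: if_splits prod.splits)

lemma row_ins_Some:
  "row_ins x r = (r', Some y) \<Longrightarrow> \<exists>a b. r = a @ y # b \<and> r' = a @ x # b \<and> (\<forall>e\<in>set a. \<not> x < e) \<and> x < y"
proof (induction x r arbitrary: r' rule: row_ins.induct)
  case (1 x) then show ?case by simp
next
  case (2 x y' ys)
  show ?case
  proof (cases "x < y'")
    case True
    then have "r' = x # ys" "y = y'" using 2 by auto
    then show ?thesis using True apply - apply (rule exI[of _ "[]"]) apply (rule exI[of _ ys]) by simp
  next
    case False
    obtain r b where rb: "row_ins x ys = (r, b)" by fastforce
    then have "r' = y' # r" "b = Some y" using 2(2) False by auto
    then obtain a c where "ys = a @ y # c" "r = a @ x # c" "\<forall>e\<in>set a. \<not> x < e" "x < y"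
      using 2(1)[OF False] rb by blast
    then show ?thesis using \<open>r' = y' # r\<close> False
      apply - apply (rule exI[of _ "y'#a"]) apply (rule exI[of _ c]) by auto
  qed
qed

lemma K1:
  assumes "sorted_wrt (<) (l # b)" "x < l"
  shows "knuth (p @ l # b @ [x]) (p @ l # x # b)"
  using assms
proof (induction b rule: rev_induct)
  case Nil then show ?case by simp
next
  case (snoc c b')
  have s: "sorted_wrt (<) (l # b')" using snoc(2) by (simp add: sorted_wrt_append)
  obtain pre m where pm: "l # b' = pre @ [m]" by (metis rev_exhaust list.distinct(1))
  have "m \<in> set (l # b')" using pm by simp
  then have mc: "m < c" using snoc(2) by (auto simp: sorted_wrt_append)
  have xm: "x < m"
  proof -
    have "m = l \<or> m \<in> set b'" using \<open>m \<in> set (l # b')\<close> by simp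
    then show ?thesis using snoc(2,3) by auto
  qed
  have "km ((p@pre) @ [m,c,x] @ []) ((p@pre) @ [m,x,c] @ [])" by (rule km.k1'[OF xm mc])
  moreover have "(p@pre) @ [m,c,x] @ [] = p @ l # (b' @ [c]) @ [x]" using pm
    by (metis append.assoc append_Cons append_Nil append_Nil2)
  moreover have "(p@pre) @ [m,x,c] @ [] = (p @ l # b' @ [x]) @ [c]" using pm
    by (metis append.assoc append_Cons append_Nil append_Nil2)
  ultimately have 1: "knuth (p @ l # (b' @ [c]) @ [x]) ((p @ l # b' @ [x]) @ [c])" by (metis r_into_rtranclp)
  have "knuth ((p @ l # b' @ [x]) @ [c]) ((p @ l # x # b') @ [c])"
    using knuth_ctx[OF snoc(1)[OF s snoc(3)], of "[]" "[c]"] by simp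
  with 1 show ?case by simp
qed

lemma K2:
  assumes "sorted_wrt (<) a" "\<forall>e\<in>set a. e < x" "x < y"
  shows "knuth (p @ a @ [y, x]) (p @ y # a @ [x])"
  using assms
proof (induction a arbitrary: x rule: rev_induct)
  case Nil then show ?case by simp
next
  case (snoc c a')
  have cx: "c < x" "c < y" using snoc by auto
  have "km ((p@a') @ [c,y,x] @ []) ((p@a') @ [y,c,x] @ [])" by (rule km.k2[OF cx(1) snoc(4)])
  then have 1: "knuth (p @ (a' @ [c]) @ [y, x]) ((p @ a' @ [y, c]) @ [x])" by auto
  have IH: "knuth (p @ a' @ [y, c]) (p @ y # a' @ [c])"
    by (rule snoc(1)) (use snoc(2) cx in \<open>auto simp: sorted_wrt_append\<close>)
  have "knuth ((p @ a' @ [y, c]) @ [x]) ((p @ y # a' @ [c]) @ [x])"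
    using knuth_ctx[OF IH, of "[]" "[x]"] by simp
  with 1 show ?case by simp
qed

lemma row_knuth:
  assumes "sorted_wrt (<) r" "x \<notin> set r" "row_ins x r = (r', Some y)"
  shows "knuth (r @ [x]) (y # r')"
proof -
  obtain a b where ab: "r = a @ y # b" "r' = a @ x # b" "\<forall>e\<in>set a. \<not> x < e" "x < y"
    using row_ins_Some[OF assms(3)] by blast
  have ax: "\<forall>e\<in>set a. e < x"
  proof
    fix e assume "e \<in> set a"
    then have "e \<in> set r" "\<not> x < e" using ab by auto
    then show "e < x" using assms(2) by (cases "e = x") auto
  qed
  have "knuth (a @ y # b @ [x]) (a @ y # x # b)"
    by (rule K1) (use assms(1) ab in \<open>auto simp: sorted_wrt_append\<close>)
  moreover have k2: "knuth ([] @ a @ [y, x]) ([] @ y # a @ [x])"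
    by (rule K2) (use assms(1) ab ax in \<open>auto simp: sorted_wrt_append\<close>)
  have "knuth ((a @ [y, x]) @ b) ((y # a @ [x]) @ b)" using knuth_ctx[OF k2, of "[]" b] by simp
  ultimately show ?thesis using ab by (simp add: rtranclp_trans)
qed

lemma row_ins_sorted:
  assumes "sorted_wrt (<) r" "x \<notin> set r" "row_ins x r = (r', b)"
  shows "sorted_wrt (<) r'"
proof (cases b)
  case None
  then have "r' = r @ [x]" "\<forall>e\<in>set r. \<not> x < e" using row_ins_None assms(3) by auto
  then show ?thesis using assms(1,2) by (auto simp: sorted_wrt_append) (metis linorder_neqE_nat)
next
  case (Some y)
  then obtain a c where ab: "r = a @ y # c" "r' = a @ x # c" "\<forall>e\<in>set a. \<not> x < e" "x < y"
    using row_ins_Some assms(3) by blast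
  have ax: "\<forall>e\<in>set a. e < x"
  proof
    fix e assume "e \<in> set a"
    then have "e \<in> set r" "\<not> x < e" using ab by auto
    then show "e < x" using assms(2) by (cases "e = x") auto
  qed
  show ?thesis using assms(1) ab ax by (auto simp: sorted_wrt_append)
qed

definition reading :: "nat list list \<Rightarrow> nat list" where
  "reading T = concat (rev T)"

lemma tab_knuth:
  assumes "\<forall>r\<in>set T. sorted_wrt (<) r" "x \<notin> set (reading T)" "distinct (reading T)"
  shows "knuth (reading T @ [x]) (reading (tab_ins x T)) \<and> (\<forall>r\<in>set (tab_ins x T). sorted_wrt (<) r)"
  using assms
proof (induction T arbitrary: x)
  case Nil then show ?case by (simp add: reading_def)
next
  case (Cons r rs)
  have sr: "sorted_wrt (<) r" and xr: "x \<notin> set r" using Cons.prems by (auto simp: reading_def)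
  obtain r' b where rb: "row_ins x r = (r', b)" by fastforce
  have sr': "sorted_wrt (<) r'" using row_ins_sorted[OF sr xr rb] .
  show ?case
  proof (cases b)
    case None
    then show ?thesis using rb row_ins_None[of x r r'] Cons.prems sr' by (auto simp: reading_def)
  next
    case (Some y)
    have rk: "knuth (r @ [x]) (y # r')" using row_knuth[OF sr xr] rb Some by simp
    have "set (y # r') = set (r @ [x])" using knuth_set[OF rk] by simp
    then have "y \<in> set r" using row_ins_Some[of x r r' y] rb Some by auto
    moreover have "distinct (reading (r # rs))" using Cons.prems by simp
    ultimately have yn: "y \<notin> set (reading rs)" by (auto simp: reading_def)
    have IH: "knuth (reading rs @ [y]) (reading (tab_ins y rs))" "\<forall>r\<in>set (tab_ins y rs). sorted_wrt (<) r"
      using Cons.IH[of y] Cons.prems yn by (auto simp: reading_def)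
    have "knuth (reading rs @ (r @ [x]) @ []) (reading rs @ (y # r') @ [])"
      using knuth_ctx[OF rk] by blast
    moreover have "knuth ((reading rs @ [y]) @ r') (reading (tab_ins y rs) @ r')"
      using knuth_ctx[OF IH(1), of "[]" r'] by simp
    ultimately have "knuth (reading (r # rs) @ [x]) (reading (tab_ins x (r # rs)))"
      using rb Some by (simp add: reading_def)
    then show ?thesis using IH(2) sr' rb Some by simp
  qed
qed

lemma rsk_P_snoc: "rsk_P (w @ [x]) = tab_ins x (rsk_P w)"
  by (simp add: rsk_P_def)

lemma rsk_knuth:
  assumes "distinct w"
  shows "knuth w (reading (rsk_P w)) \<and> (\<forall>r\<in>set (rsk_P w). sorted_wrt (<) r)"
  using assms
proof (induction w rule: rev_induct)
  case Nil then show ?case by (simp add: rsk_P_def reading_def)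
next
  case (snoc x w)
  have IH: "knuth w (reading (rsk_P w))" "\<forall>r\<in>set (rsk_P w). sorted_wrt (<) r" using snoc by auto
  have st: "set (reading (rsk_P w)) = set w" using knuth_set[OF IH(1)] by simp
  have di: "distinct (reading (rsk_P w))" using knuth_G[OF IH(1)] snoc(2) by auto
  have xn: "x \<notin> set (reading (rsk_P w))" using st snoc(2) by simp
  have tk: "knuth (reading (rsk_P w) @ [x]) (reading (tab_ins x (rsk_P w)))"
    "\<forall>r\<in>set (tab_ins x (rsk_P w)). sorted_wrt (<) r"
    using tab_knuth[OF IH(2) xn di] by auto
  have "knuth (w @ [x]) (reading (rsk_P w) @ [x])" using knuth_ctx[OF IH(1), of "[]" "[x]"] by simp
  then show ?case using tk rsk_P_snoc by (simp add: rtranclp_trans)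
qed

lemma rsk_G:
  assumes "distinct w"
  shows "G (reading (rsk_P w)) j = G w j" "distinct (reading (rsk_P w))"
    "set (reading (rsk_P w)) = set w"
proof -
  have k: "knuth w (reading (rsk_P w))" using rsk_knuth[OF assms] by simp
  show "G (reading (rsk_P w)) j = G w j" "distinct (reading (rsk_P w))"
    using knuth_G[OF k assms, of j] by auto
  show "set (reading (rsk_P w)) = set w" using knuth_set[OF k] by simp
qed

definition dominates :: "nat list \<Rightarrow> nat list \<Rightarrow> bool" where
  "dominates r s \<longleftrightarrow> length s \<le> length r \<and> (\<forall>c<length s. r!c < s!c)"

fun domc :: "nat list list \<Rightarrow> bool" where
  "domc [] = True"
| "domc [r] = True"
| "domc (r # s # rs) = (dominates r s \<and> domc (s # rs))"

lemma row_ins_Some_nth: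
  assumes "row_ins x r = (r', Some y)" "sorted_wrt (<) r" "x \<notin> set r"
  shows "\<exists>j<length r. r!j = y \<and> r' = r[j := x] \<and> (\<forall>c<j. r!c < x) \<and> x < y"
proof -
  obtain a b where ab: "r = a @ y # b" "r' = a @ x # b" "\<forall>e\<in>set a. \<not> x < e" "x < y"
    using row_ins_Some[OF assms(1)] by blast
  have ax: "\<forall>e\<in>set a. e < x"
  proof
    fix e assume "e \<in> set a"
    then have "e \<in> set r" "\<not> x < e" using ab by auto
    then show "e < x" using assms(3) by (cases "e = x") auto
  qed
  show ?thesis
  proof (intro exI[of _ "length a"] conjI)
    show "length a < length r" "r ! length a = y" "r' = r[length a := x]" "x < y" using ab by auto
    show "\<forall>c<length a. r ! c < x" using ax ab(1) by (auto simp: nth_append)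
  qed
qed

lemma row_ins_None':
  assumes "row_ins x r = (r', None)" "x \<notin> set r"
  shows "r' = r @ [x] \<and> (\<forall>c<length r. r!c < x)"
proof -
  have "r' = r @ [x]" "\<forall>e\<in>set r. \<not> x < e" using row_ins_None[OF assms(1)] by auto
  moreover have "\<forall>c<length r. r!c \<noteq> x" using assms(2) by auto
  ultimately show ?thesis by (auto simp: nth_mem) (metis linorder_neqE_nat nth_mem)
qed

lemma sorted_nth_less: "sorted_wrt (<) r \<Longrightarrow> i < j \<Longrightarrow> j < length r \<Longrightarrow> r!i < r!j"
  by (simp add: sorted_wrt_iff_nth_less)

lemma dom_step:
  assumes "row_ins x r = (r', Some y)" "sorted_wrt (<) r" "x \<notin> set r"
    "sorted_wrt (<) s" "y \<notin> set s" "dominates r s" "row_ins y s = (s', b)"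
  shows "dominates r' s'"
proof -
  obtain j where j: "j < length r" "r!j = y" "r' = r[j := x]" "\<forall>c<j. r!c < x" "x < y"
    using row_ins_Some_nth[OF assms(1-3)] by blast
  have dom: "length s \<le> length r" "\<forall>c<length s. r!c < s!c" using assms(6) by (auto simp: dominates_def)
  have lr': "length r' = length r" using j by simp
  have r'c: "\<And>c. c < length r \<Longrightarrow> c \<noteq> j \<Longrightarrow> r'!c = r!c" "r'!j = x" using j by auto
  show ?thesis
  proof (cases b)
    case None
    then have s': "s' = s @ [y]" "\<forall>c<length s. s!c < y" using row_ins_None'[OF _ assms(5)] assms(7) by auto
    have "length s \<le> j"
    proof (rule ccontr)
      assume "\<not> length s \<le> j"
      then have "r!j < s!j" "s!j < y" using dom s' by auto
      then show False using j by simp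
    qed
    show ?thesis unfolding dominates_def
    proof (intro conjI allI impI)
      show "length s' \<le> length r'" using s' lr' \<open>length s \<le> j\<close> j by simp
    next
      fix c assume c: "c < length s'"
      show "r'!c < s'!c"
      proof (cases "c < length s")
        case True
        then have "c \<noteq> j" using \<open>length s \<le> j\<close> by simp
        then show ?thesis using r'c True dom s' \<open>length s \<le> j\<close> j by (simp add: nth_append)
      next
        case False
        then have "c = length s" using c s' by simp
        then have "s'!c = y" using s' by simp
        moreover have "r'!c < y"
        proof (cases "c = j")
          case True then show ?thesis using r'c j by simp
        next
          case False
          then have "c < j" using \<open>c = length s\<close> \<open>length s \<le> j\<close> by simp
          then show ?thesis using r'c sorted_nth_less[OF assms(2) \<open>c < j\<close> j(1)] j by simp
        qed
        ultimately show ?thesis by simp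
      qed
    qed
  next
    case (Some z)
    obtain j' where j': "j' < length s" "s!j' = z" "s' = s[j' := y]" "\<forall>c<j'. s!c < y" "y < z"
      using row_ins_Some_nth[OF _ assms(4,5)] assms(7) Some by blast
    have "j' \<le> j"
    proof (rule ccontr)
      assume "\<not> j' \<le> j"
      then have "s!j < y" "r!j < s!j" using j' dom by auto
      then show False using j by simp
    qed
    show ?thesis unfolding dominates_def
    proof (intro conjI allI impI)
      show "length s' \<le> length r'" using j' lr' dom by simp
    next
      fix c assume c: "c < length s'"
      show "r'!c < s'!c"
      proof (cases "c = j'")
        case True
        then have "s'!c = y" using j' by simp
        moreover have "r'!c < y"
        proof (cases "c = j")
          case True then show ?thesis using r'c j by simp
        next
          case False
          then have "c < j" using \<open>c = j'\<close> \<open>j' \<le> j\<close> by simp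
          then show ?thesis using r'c sorted_nth_less[OF assms(2) \<open>c < j\<close> j(1)] j by simp
        qed
        ultimately show ?thesis by simp
      next
        case False
        then have sc: "s'!c = s!c" using j' by simp
        have cs: "c < length s" using c j' by simp
        show ?thesis
        proof (cases "c = j")
          case True
          then show ?thesis using r'c sc dom cs j by fastforce
        next
          case False
          then show ?thesis using r'c sc dom cs by fastforce
        qed
      qed
    qed
  qed
qed

lemma dominates_app: "dominates r s \<Longrightarrow> dominates (r @ [x]) s"
  by (auto simp: dominates_def nth_append)

definition hdr :: "nat list list \<Rightarrow> nat list" where
  "hdr T = (case T of [] \<Rightarrow> [] | r # _ \<Rightarrow> r)"

lemma domc_Cons: "domc (r # T) \<longleftrightarrow> dominates r (hdr T) \<and> domc T"
  by (cases T) (auto simp: hdr_def dominates_def)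

lemma hdr_tab_ins: "hdr (tab_ins y T) = fst (row_ins y (hdr T))"
  by (cases T) (auto simp: hdr_def split: prod.splits option.splits)

lemma tab_ins_domc:
  assumes "\<forall>r\<in>set T. sorted_wrt (<) r" "x \<notin> set (reading T)" "distinct (reading T)" "domc T"
  shows "domc (tab_ins x T)"
  using assms
proof (induction T arbitrary: x)
  case Nil then show ?case by simp
next
  case (Cons r rs)
  have sr: "sorted_wrt (<) r" and xr: "x \<notin> set r" using Cons.prems by (auto simp: reading_def)
  have dr: "dominates r (hdr rs)" "domc rs" using Cons.prems(4) domc_Cons by auto
  obtain r' b where rb: "row_ins x r = (r', b)" by fastforce
  show ?case
  proof (cases b)
    case None
    then have "r' = r @ [x]" using row_ins_None rb by auto
    then show ?thesis using rb None dr dominates_app domc_Cons by simp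
  next
    case (Some y)
    have yr: "y \<in> set r" using row_ins_Some[of x r r' y] rb Some by auto
    have di: "distinct (reading rs @ r)" using Cons.prems(3) by (simp add: reading_def)
    then have yn: "y \<notin> set (reading rs)" using yr by auto
    have dis: "distinct (reading rs)" using di by simp
    have srs: "\<forall>r\<in>set rs. sorted_wrt (<) r" using Cons.prems by simp
    have IH: "domc (tab_ins y rs)" using Cons.IH[OF srs yn dis dr(2)] .
    have hs: "sorted_wrt (<) (hdr rs)" using srs by (cases rs) (auto simp: hdr_def)
    have hy: "y \<notin> set (hdr rs)" using yn by (cases rs) (auto simp: hdr_def reading_def)
    obtain s' b' where sb: "row_ins y (hdr rs) = (s', b')" by fastforce
    have "dominates r' s'" using dom_step[OF _ sr xr hs hy dr(1) sb] rb Some by simp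
    then have "dominates r' (hdr (tab_ins y rs))" using hdr_tab_ins sb by simp
    then show ?thesis using IH rb Some domc_Cons by simp
  qed
qed

lemma rsk_domc:
  assumes "distinct w" shows "domc (rsk_P w)"
  using assms
proof (induction w rule: rev_induct)
  case Nil then show ?case by (simp add: rsk_P_def)
next
  case (snoc x w)
  have d: "distinct w" using snoc by simp
  have "x \<notin> set (reading (rsk_P w))" using rsk_G(3)[OF d] snoc by simp
  then show ?case using tab_ins_domc[OF _ _ rsk_G(2)[OF d] snoc(1)[OF d]] rsk_knuth[OF d] rsk_P_snoc by simp
qed

lemma filter_sorted_nth:
  "sorted_wrt R (filter P w) \<Longrightarrow> i < j \<Longrightarrow> j < length w \<Longrightarrow> P (w!i) \<Longrightarrow> P (w!j) \<Longrightarrow> R (w!i) (w!j)"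
proof (induction w arbitrary: i j)
  case Nil then show ?case by simp
next
  case (Cons a w)
  obtain j' where j': "j = Suc j'" using Cons.prems(2) by (cases j) auto
  show ?case
  proof (cases i)
    case 0
    then have "w!j' \<in> set (filter P w)" using Cons.prems j' by auto
    then show ?thesis using Cons.prems 0 j' by simp
  next
    case (Suc i')
    have "sorted_wrt R (filter P w)" using Cons.prems(1) by (auto split: if_splits)
    then show ?thesis using Cons.IH[of i' j'] Cons.prems Suc j' by simp
  qed
qed

lemma split1: "k < length T \<Longrightarrow> \<exists>X Z. reading T = X @ T!k @ Z"
proof -
  assume "k < length T"
  then have "T = take k T @ T!k # drop (Suc k) T" by (simp add: id_take_nth_drop)
  then have "reading T = concat (rev (drop (Suc k) T)) @ T!k @ concat (rev (take k T))"
    unfolding reading_def by (metis concat.simps(2) concat_append rev.simps(2) rev_append append.assoc append.simps)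
  then show ?thesis by blast
qed

lemma split2: "k < k' \<Longrightarrow> k' < length T \<Longrightarrow> \<exists>X Y Z. reading T = X @ T!k' @ Y @ T!k @ Z"
proof -
  assume kk: "k < k'" "k' < length T"
  define T1 where "T1 = drop (Suc k) T"
  have "T = take k T @ T!k # T1" using kk by (simp add: id_take_nth_drop T1_def)
  moreover have "T1 = take (k' - Suc k) T1 @ T1!(k' - Suc k) # drop (Suc (k' - Suc k)) T1"
    by (rule id_take_nth_drop) (use kk in \<open>simp add: T1_def\<close>)
  moreover have "T1!(k' - Suc k) = T!k'" using kk by (simp add: T1_def)
  ultimately have "T = take k T @ T!k # (take (k' - Suc k) T1 @ T!k' # drop (Suc (k' - Suc k)) T1)" by simp
  then have "reading T = concat (rev (drop (Suc (k' - Suc k)) T1)) @ T!k' @ concat (rev (take (k' - Suc k) T1)) @ T!k @ concat (rev (take k T))"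
    unfolding reading_def by (metis concat.simps(2) concat_append rev.simps(2) rev_append append.assoc append.simps)
  then show ?thesis by blast
qed

lemma row_distinct: "distinct (reading T) \<Longrightarrow> k < length T \<Longrightarrow> distinct (T!k)"
  using split1 by fastforce

lemma rows_disjoint: "distinct (reading T) \<Longrightarrow> k < length T \<Longrightarrow> k' < length T \<Longrightarrow> k \<noteq> k' \<Longrightarrow> set (T!k) \<inter> set (T!k') = {}"
proof -
  assume a: "distinct (reading T)" "k < length T" "k' < length T" "k \<noteq> k'"
  have "\<And>a b. a < b \<Longrightarrow> b < length T \<Longrightarrow> set (T!a) \<inter> set (T!b) = {}"
  proof -
    fix a b assume "a < b" "b < length T"
    then obtain X Y Z where "reading T = X @ T!b @ Y @ T!a @ Z" using split2 by blast
    then show "set (T!a) \<inter> set (T!b) = {}" using \<open>distinct (reading T)\<close> by auto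
  qed
  then show ?thesis using a by (metis Int_commute linorder_neqE_nat)
qed

lemma row_incr:
  assumes "distinct (reading T)" "k < length T" "sorted_wrt (<) (T!k)"
  shows "incr (reading T) (set (T!k))"
proof -
  obtain X Z where XZ: "reading T = X @ T!k @ Z" using split1 assms(2) by blast
  have "filter (\<lambda>v. v \<in> set (T!k)) X = []" "filter (\<lambda>v. v \<in> set (T!k)) Z = []"
    using assms(1) XZ by (auto simp: filter_empty_conv)
  moreover have "filter (\<lambda>v. v \<in> set (T!k)) (T!k) = T!k" by simp
  ultimately have "filter (\<lambda>v. v \<in> set (T!k)) (reading T) = T!k" using XZ by simp
  then have "sorted_wrt (<) (filter (\<lambda>v. v \<in> set (T!k)) (reading T))" using assms(3) by simp
  then show ?thesis unfolding incr_def using XZ filter_sorted_nth by fastforce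
qed

lemma domc_adj: "domc T \<Longrightarrow> Suc k < length T \<Longrightarrow> dominates (T!k) (T!Suc k)"
proof (induction T arbitrary: k rule: domc.induct)
  case (3 r s rs) then show ?case by (cases k) auto
qed auto

lemma domc_col:
  assumes "domc T" "k < k'" "k' < length T" "c < length (T!k')"
  shows "c < length (T!k) \<and> T!k!c < T!k'!c"
  using assms(2-4)
proof (induction k' rule: less_induct)
  case (less k')
  obtain m where m: "k' = Suc m" using less.prems by (cases k') auto
  have d: "dominates (T!m) (T!k')" using domc_adj[OF assms(1)] less.prems m by simp
  then have cm: "c < length (T!m)" "T!m!c < T!k'!c" using less.prems by (auto simp: dominates_def)
  show ?case
  proof (cases "k = m")
    case True then show ?thesis using cm by simp
  next
    case False
    then have "k < m" using less.prems m by simp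
    then show ?thesis using less.IH[of m] cm m less.prems by auto
  qed
qed

lemma same_col:
  assumes "domc T" "incr (reading T) S" "k < k'" "k' < length T" "c < length (T!k')"
  shows "\<not> (T!k!c \<in> S \<and> T!k'!c \<in> S)"
proof
  assume in2: "T!k!c \<in> S \<and> T!k'!c \<in> S"
  have col: "c < length (T!k)" "T!k!c < T!k'!c" using domc_col[OF assms(1,3,4,5)] by auto
  obtain X Y Z where XYZ: "reading T = X @ T!k' @ Y @ T!k @ Z" using split2 assms(3,4) by blast
  define p1 where "p1 = length X + c"
  define p2 where "p2 = length X + length (T!k') + length Y + c"
  have "reading T ! p1 = T!k'!c" using XYZ assms(5) by (simp add: p1_def nth_append)
  moreover have "reading T ! p2 = T!k!c" using XYZ col by (simp add: p2_def nth_append)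
  moreover have "p1 < p2" "p2 < length (reading T)" using XYZ col assms(5) by (auto simp: p1_def p2_def)
  ultimately have "T!k'!c < T!k!c" using assms(2) in2 unfolding incr_def by metis
  then show False using col by simp
qed

lemma down_closed_eq:
  fixes H :: "nat set"
  assumes "\<And>k k'. k' \<in> H \<Longrightarrow> k < k' \<Longrightarrow> k \<in> H" "b \<notin> H"
  shows "\<exists>m. H = {..<m}"
proof -
  define m where "m = (LEAST k. k \<notin> H)"
  have mH: "m \<notin> H" unfolding m_def by (rule LeastI[of _ b]) (use assms(2) in simp)
  have "\<And>k. k < m \<Longrightarrow> k \<in> H" unfolding m_def using not_less_Least by blast
  moreover have "\<And>k. k \<in> H \<Longrightarrow> k < m"
  proof (rule ccontr)
    fix k assume "k \<in> H" "\<not> k < m"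
    then have "m \<in> H" using assms(1) by (cases "m = k") auto
    then show False using mH by simp
  qed
  ultimately show ?thesis by auto
qed

lemma tab_upper:
  assumes dom: "domc T" and dist: "distinct (reading T)" and F: "fam (reading T) j F"
  shows "card (\<Union>k<j. F k) \<le> (\<Sum>k<j. part (map length T) k)"
proof -
  define w where "w = reading T"
  define U where "U = (\<Union>k<j. F k)"
  define cells where "cells = {(k,c). k < length T \<and> c < length (T!k)}"
  define val where "val = (\<lambda>(k,c). T!k!c)"
  have setw: "set w = val ` cells"
  proof
    show "set w \<subseteq> val ` cells"
    proof
      fix a assume "a \<in> set w"
      then obtain r where "r \<in> set T" "a \<in> set r" by (auto simp: w_def reading_def)
      then obtain k c where "k < length T" "T!k = r" "c < length r" "r!c = a" by (metis in_set_conv_nth)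
      then show "a \<in> val ` cells" unfolding cells_def val_def by force
    qed
  next
    show "val ` cells \<subseteq> set w"
    proof
      fix a assume "a \<in> val ` cells"
      then obtain k c where kc: "k < length T" "c < length (T!k)" "a = T!k!c" unfolding cells_def val_def by auto
      then have "a \<in> set (T!k)" "T!k \<in> set T" by auto
      then show "a \<in> set w" unfolding w_def reading_def by auto
    qed
  qed
  have inj: "inj_on val cells"
  proof (rule inj_onI)
    fix p q assume pq: "p \<in> cells" "q \<in> cells" "val p = val q"
    obtain k c where p: "p = (k,c)" by fastforce
    obtain k' c' where q: "q = (k',c')" by fastforce
    have kc: "k < length T" "c < length (T!k)" "k' < length T" "c' < length (T!k')" using pq p q by (auto simp: cells_def)
    have e: "T!k!c = T!k'!c'" using pq p q by (simp add: val_def)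
    show "p = q"
    proof (cases "k = k'")
      case True
      then show ?thesis using row_distinct[OF dist kc(1)] kc e p q nth_eq_iff_index_eq by metis
    next
      case False
      then have "set (T!k) \<inter> set (T!k') = {}" using rows_disjoint[OF dist kc(1,3)] by simp
      then show ?thesis using kc e by (metis disjoint_iff nth_mem)
    qed
  qed
  have Uw: "U \<subseteq> set w" using F unfolding U_def w_def fam_def incr_def by blast
  define A where "A = {q \<in> cells. val q \<in> U}"
  have UA: "U = val ` A" using Uw setw unfolding A_def by auto
  have cardUA: "card U = card A" unfolding UA by (rule card_image) (use inj in \<open>auto simp: A_def intro: inj_on_subset\<close>)
  define L where "L = length w"
  have cL: "\<And>k c. k < length T \<Longrightarrow> c < length (T!k) \<Longrightarrow> c < L"
  proof -
    fix k c assume "k < length T" "c < length (T!k)"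
    then obtain X Z where "reading T = X @ T!k @ Z" using split1 by blast
    then show "c < L" using \<open>c < length (T!k)\<close> by (simp add: L_def w_def)
  qed
  have fincells: "finite cells"
    by (rule finite_subset[of _ "{..<length T} \<times> {..<L}"]) (auto simp: cells_def cL)
  define Ac where "Ac c = {k. (k,c) \<in> A}" for c
  have cardA: "card A = (\<Sum>c<L. card (Ac c))"
  proof -
    have "prod.swap ` A = Sigma {..<L} Ac" unfolding Ac_def A_def cells_def using cL by auto
    moreover have "card (prod.swap ` A) = card A" by (rule card_image) simp
    moreover have "card (Sigma {..<L} Ac) = (\<Sum>c<L. card (Ac c))"
    proof (rule card_SigmaI)
      show "\<forall>c\<in>{..<L}. finite (Ac c)"
        by (auto intro: finite_subset[of _ "{..<length T}"] simp: Ac_def A_def cells_def)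
    qed simp
    ultimately show ?thesis by simp
  qed
  define Bc where "Bc c = {k. k < j \<and> k < length T \<and> c < length (T!k)}" for c
  define Q where "Q = {(k,c). k < j \<and> k < length T \<and> c < length (T!k)}"
  have cardQ1: "card Q = (\<Sum>c<L. card (Bc c))"
  proof -
    have "prod.swap ` Q = Sigma {..<L} Bc" unfolding Bc_def Q_def using cL by auto
    moreover have "card (prod.swap ` Q) = card Q" by (rule card_image) simp
    moreover have "card (Sigma {..<L} Bc) = (\<Sum>c<L. card (Bc c))"
    proof (rule card_SigmaI)
      show "\<forall>c\<in>{..<L}. finite (Bc c)" by (auto simp: Bc_def)
    qed simp
    ultimately show ?thesis by simp
  qed
  have cardQ2: "card Q = (\<Sum>k<j. part (map length T) k)"
  proof -
    have "Q = Sigma {k. k < j \<and> k < length T} (\<lambda>k. {..<length (T!k)})" unfolding Q_def by auto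
    then have "card Q = (\<Sum>k\<in>{k. k < j \<and> k < length T}. card {..<length (T!k)})"
      by (simp add: card_SigmaI)
    also have "\<dots> = (\<Sum>k\<in>{k\<in>{..<j}. k < length T}. length (T!k))" by simp
    also have "\<dots> = (\<Sum>k<j. if k < length T then length (T!k) else 0)"
      by (rule sum.inter_filter) simp
    also have "\<dots> = (\<Sum>k<j. part (map length T) k)" unfolding part_def by (intro sum.cong refl) simp
    finally show ?thesis .
  qed
  have each: "\<And>c. card (Ac c) \<le> card (Bc c)"
  proof -
    fix c
    define H where "H = {k. k < length T \<and> c < length (T!k)}"
    have "\<exists>m. H = {..<m}"
    proof (rule down_closed_eq[of H "length T"])
      fix k k' assume "k' \<in> H" "k < k'"
      then show "k \<in> H" using domc_col[OF dom, of k k' c] unfolding H_def by auto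
    qed (simp add: H_def)
    then obtain m where m: "H = {..<m}" by blast
    have B0: "Bc c = {..<j} \<inter> H" unfolding Bc_def H_def by blast
    have "{..<j} \<inter> {..<m} = {..<min j m}" by auto
    then have B: "Bc c = {..<min j m}" using B0 m by simp
    have AH0: "Ac c \<subseteq> H" unfolding Ac_def A_def cells_def H_def by blast
    then have AH: "Ac c \<subseteq> {..<m}" using m by simp
    have c1: "card (Ac c) \<le> m" using card_mono[OF _ AH] by simp
    define g where "g k = (SOME i. i < j \<and> T!k!c \<in> F i)" for k
    have gk: "\<And>k. k \<in> Ac c \<Longrightarrow> g k < j \<and> T!k!c \<in> F (g k)"
    proof -
      fix k assume "k \<in> Ac c"
      then have "T!k!c \<in> U" unfolding Ac_def A_def val_def by auto
      then have "\<exists>i. i < j \<and> T!k!c \<in> F i" unfolding U_def by auto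
      then show "g k < j \<and> T!k!c \<in> F (g k)" unfolding g_def by (rule someI_ex)
    qed
    have ginj: "inj_on g (Ac c)"
    proof (rule inj_onI)
      fix k k' assume kk: "k \<in> Ac c" "k' \<in> Ac c" "g k = g k'"
      have inc: "incr (reading T) (F (g k))" using F gk[OF kk(1)] unfolding fam_def by auto
      have cells: "k < length T" "c < length (T!k)" "k' < length T" "c < length (T!k')"
        using kk unfolding Ac_def A_def cells_def by auto
      show "k = k'"
      proof (rule ccontr)
        assume "k \<noteq> k'"
        then consider "k < k'" | "k' < k" by linarith
        then show False
        proof cases
          case 1 then show False using same_col[OF dom inc 1 cells(3,4)] gk[OF kk(1)] gk[OF kk(2)] kk(3) by simp
        next
          case 2 then show False using same_col[OF dom inc 2 cells(1,2)] gk[OF kk(1)] gk[OF kk(2)] kk(3) by simp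
        qed
      qed
    qed
    have "card (Ac c) \<le> card {..<j}"
      by (rule card_inj_on_le[OF ginj]) (use gk in auto)
    then show "card (Ac c) \<le> card (Bc c)" using c1 B by simp
  qed
  have "card U = (\<Sum>c<L. card (Ac c))" using cardUA cardA by simp
  also have "\<dots> \<le> (\<Sum>c<L. card (Bc c))" by (rule sum_mono) (rule each)
  also have "\<dots> = (\<Sum>k<j. part (map length T) k)" using cardQ1 cardQ2 by simp
  finally show ?thesis unfolding U_def .
qed

lemma tab_lower:
  assumes dist: "distinct (reading T)" and srt: "\<forall>r\<in>set T. sorted_wrt (<) r"
  shows "(\<Sum>k<j. part (map length T) k) \<le> G (reading T) j"
proof -
  define F where "F k = (if k < length T then set (T!k) else {})" for k
  have fam: "fam (reading T) j F"
    unfolding fam_def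
  proof (intro conjI allI impI)
    fix i assume "i < j"
    show "incr (reading T) (F i)"
    proof (cases "i < length T")
      case True then show ?thesis using row_incr[OF dist True] srt F_def by simp
    next
      case False then show ?thesis by (simp add: F_def incr_def)
    qed
  next
    fix i i' assume "i < j" "i' < j" "i \<noteq> i'"
    then show "F i \<inter> F i' = {}" using rows_disjoint[OF dist] by (simp add: F_def)
  qed
  have "card (\<Union>k<j. F k) = (\<Sum>k<j. card (F k))"
    by (rule card_UN_disjoint) (auto simp: F_def dest: rows_disjoint[OF dist])
  also have "\<dots> = (\<Sum>k<j. part (map length T) k)"
    by (rule sum.cong) (auto simp: F_def part_def distinct_card row_distinct[OF dist])
  finally show ?thesis using G_upper[OF fam] by simp
qed

lemma G_tab:
  assumes "domc T" "distinct (reading T)" "\<forall>r\<in>set T. sorted_wrt (<) r"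
  shows "G (reading T) j = (\<Sum>k<j. part (map length T) k)"
proof -
  obtain F where "fam (reading T) j F" "card (\<Union>k<j. F k) = G (reading T) j" using G_obtain by blast
  then have "G (reading T) j \<le> (\<Sum>k<j. part (map length T) k)" using tab_upper[OF assms(1,2)] by metis
  then show ?thesis using tab_lower[OF assms(2,3), of j] by simp
qed

lemma tau_less:
  "a < b \<Longrightarrow> \<not> (a = k \<and> b = Suc k) \<Longrightarrow> transpose k (Suc k) a < transpose k (Suc k) b"
  by (auto simp: transpose_def)

lemma vs_gen:
  assumes w2: "w2 = map (transpose k (Suc k)) w1"
    and nb: "\<And>S. S \<subseteq> F0 \<Longrightarrow> incr w1 S \<Longrightarrow> \<not> (k \<in> S \<and> Suc k \<in> S)"
    and S: "incr w1 S" "S \<subseteq> F0"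
  shows "incr w2 (transpose k (Suc k) ` S)"
  unfolding incr_def
proof (intro conjI allI impI)
  let ?t = "transpose k (Suc k)"
  show "?t ` S \<subseteq> set w2" using S w2 unfolding incr_def by auto
next
  let ?t = "transpose k (Suc k)"
  fix i j assume ij: "i < j" "j < length w2" "w2!i \<in> ?t ` S" "w2!j \<in> ?t ` S"
  have e: "w2!i = ?t (w1!i)" "w2!j = ?t (w1!j)" using ij w2 by auto
  have inS: "w1!i \<in> S" "w1!j \<in> S" using ij(3,4) e inj_transpose[of k "Suc k"]
    by (auto simp: inj_image_mem_iff)
  have lt: "w1!i < w1!j" using S(1) ij inS w2 unfolding incr_def by auto
  have "\<not> (w1!i = k \<and> w1!j = Suc k)" using nb[OF S(2) S(1)] inS by auto
  then show "w2!i < w2!j" using tau_less[OF lt] e by simp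
qed

lemma vs_fam:
  assumes w2: "w2 = map (transpose k (Suc k)) w1"
    and nb: "\<And>S. incr w1 S \<Longrightarrow> \<not> (k \<in> S \<and> Suc k \<in> S)"
    and F: "fam w1 j F"
  shows "fam w2 j (\<lambda>i. transpose k (Suc k) ` F i)"
  unfolding fam_def
proof (intro conjI allI impI)
  fix i assume "i < j"
  then have "incr w1 (F i)" using F by (auto simp: fam_def)
  then show "incr w2 (transpose k (Suc k) ` F i)" using vs_gen[OF w2, of "F i"] nb by blast
next
  fix i i' assume "i < j" "i' < j" "i \<noteq> i'"
  then have "F i \<inter> F i' = {}" using F by (auto simp: fam_def)
  then show "transpose k (Suc k) ` F i \<inter> transpose k (Suc k) ` F i' = {}"
    by (simp add: image_Int[symmetric] inj_transpose)
qed

lemma vs_le: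
  assumes w2: "w2 = map (transpose k (Suc k)) w1"
    and nb: "\<And>S. incr w1 S \<Longrightarrow> \<not> (k \<in> S \<and> Suc k \<in> S)"
  shows "G w1 j \<le> G w2 j"
proof -
  have "G w1 j \<le> G w2 j + 0"
  proof (rule G_transfer)
    fix F assume F: "fam w1 j F"
    have "card (\<Union>i<j. transpose k (Suc k) ` F i) = card (transpose k (Suc k) ` (\<Union>i<j. F i))"
      by (simp add: image_UN)
    also have "\<dots> = card (\<Union>i<j. F i)" by (rule card_image) (metis inj_transpose inj_on_subset subset_UNIV)
    finally show "\<exists>F'. fam w2 j F' \<and> card (\<Union>i<j. F i) \<le> card (\<Union>i<j. F' i) + 0"
      using vs_fam[OF w2 nb F] by (intro exI[of _ "\<lambda>i. transpose k (Suc k) ` F i"]) auto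
  qed
  then show ?thesis by simp
qed

lemma vs_le1:
  assumes w2: "w2 = map (transpose k (Suc k)) w1"
  shows "G w1 j \<le> G w2 j + 1"
proof (rule G_transfer)
  fix F assume F: "fam w1 j F"
  define F1 where "F1 i = F i - {k}" for i
  have F1: "fam w1 j F1" using F unfolding fam_def F1_def by (auto intro: incr_subset)
  have nb: "\<And>S. S \<subseteq> UNIV - {k} \<Longrightarrow> incr w1 S \<Longrightarrow> \<not> (k \<in> S \<and> Suc k \<in> S)" by auto
  have famF: "fam w2 j (\<lambda>i. transpose k (Suc k) ` F1 i)"
    unfolding fam_def
  proof (intro conjI allI impI)
    fix i assume "i < j"
    then have "incr w1 (F1 i)" using F1 by (auto simp: fam_def)
    then show "incr w2 (transpose k (Suc k) ` F1 i)" using vs_gen[OF w2 nb] F1_def by blast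
  next
    fix i i' assume "i < j" "i' < j" "i \<noteq> i'"
    then have "F1 i \<inter> F1 i' = {}" using F1 by (auto simp: fam_def)
    then show "transpose k (Suc k) ` F1 i \<inter> transpose k (Suc k) ` F1 i' = {}"
      by (simp add: image_Int[symmetric] inj_transpose)
  qed
  have "(\<Union>i<j. F i) \<subseteq> set w1" using F unfolding fam_def incr_def by blast
  then have fin: "finite (\<Union>i<j. F i)" using finite_subset by blast
  have "card (\<Union>i<j. transpose k (Suc k) ` F1 i) = card (transpose k (Suc k) ` (\<Union>i<j. F1 i))"
    by (simp add: image_UN)
  also have "\<dots> = card (\<Union>i<j. F1 i)" by (rule card_image) (metis inj_transpose inj_on_subset subset_UNIV)
  also have "(\<Union>i<j. F1 i) = (\<Union>i<j. F i) - {k}" unfolding F1_def by auto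
  finally have "card (\<Union>i<j. transpose k (Suc k) ` F1 i) = card ((\<Union>i<j. F i) - {k})" .
  moreover have "card (\<Union>i<j. F i) \<le> card ((\<Union>i<j. F i) - {k}) + 1"
    using fin by (cases "k \<in> (\<Union>i<j. F i)") (auto simp: card_Diff_singleton)
  ultimately show "\<exists>F'. fam w2 j F' \<and> card (\<Union>i<j. F i) \<le> card (\<Union>i<j. F' i) + 1"
    using famF by (intro exI[of _ "\<lambda>i. transpose k (Suc k) ` F1 i"]) auto
qed

lemma map_tau_tau: "map (transpose k (Suc k)) (map (transpose k (Suc k)) w) = w"
  by (simp add: map_idI)

lemma vswap:
  assumes d: "distinct w" and kin: "k \<in> set w" "Suc k \<in> set w"
  shows "(\<forall>j. G (map (transpose k (Suc k)) w) j \<le> G w j \<and> G w j \<le> G (map (transpose k (Suc k)) w) j + 1) \<or>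
         (\<forall>j. G w j \<le> G (map (transpose k (Suc k)) w) j \<and> G (map (transpose k (Suc k)) w) j \<le> G w j + 1)"
proof -
  let ?t = "transpose k (Suc k)"
  let ?w' = "map ?t w"
  obtain a where a: "a < length w" "w!a = k" using kin by (auto simp: in_set_conv_nth)
  obtain b where b: "b < length w" "w!b = Suc k" using kin by (auto simp: in_set_conv_nth)
  have w'a: "?w'!a = Suc k" "?w'!b = k" using a b by auto
  have "a \<noteq> b" using a b by auto
  then consider "a < b" | "b < a" by linarith
  then show ?thesis
  proof cases
    case 1
    have nb: "\<And>S. incr ?w' S \<Longrightarrow> \<not> (k \<in> S \<and> Suc k \<in> S)"
    proof
      fix S assume I: "incr ?w' S" "k \<in> S \<and> Suc k \<in> S"
      have "a < length ?w'" "b < length ?w'" "?w'!a \<in> S" "?w'!b \<in> S" using a b w'a I(2) by auto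
      then have "?w'!a < ?w'!b" using 1 I(1) unfolding incr_def by blast
      then show False using w'a by simp
    qed
    have "\<And>j. G ?w' j \<le> G w j" using vs_le[of w k ?w', OF map_tau_tau[symmetric] nb] by simp
    moreover have "\<And>j. G w j \<le> G ?w' j + 1" by (rule vs_le1[of ?w' k w]) simp
    ultimately show ?thesis by blast
  next
    case 2
    have nb: "\<And>S. incr w S \<Longrightarrow> \<not> (k \<in> S \<and> Suc k \<in> S)"
    proof
      fix S assume I: "incr w S" "k \<in> S \<and> Suc k \<in> S"
      then have "w!b < w!a" using 2 a b unfolding incr_def by metis
      then show False using a b by simp
    qed
    have "\<And>j. G w j \<le> G ?w' j" using vs_le[of ?w' k w, OF _ nb] by simp
    moreover have "\<And>j. G ?w' j \<le> G w j + 1" by (rule vs_le1[of w k ?w']) (simp add: map_tau_tau)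
    ultimately show ?thesis by blast
  qed
qed

lemma lemC:
  fixes f g :: "nat \<Rightarrow> nat" and N n :: nat
  assumes mf: "\<And>i. f (Suc i) \<le> f i" and mg: "\<And>i. g (Suc i) \<le> g i"
    and e1: "\<And>j. (\<Sum>i<j. g i) \<le> (\<Sum>i<j. f i)" and e2: "\<And>j. (\<Sum>i<j. f i) \<le> (\<Sum>i<j. g i) + 1"
    and sf: "(\<Sum>i<N. f i) = n" and sg: "(\<Sum>i<N. g i) = n"
  shows "(\<Sum>i<N. \<bar>int (f i) - int (g i)\<bar>)^2 \<le> 2 * int n"
proof -
  define e where "e j = int (\<Sum>i<j. f i) - int (\<Sum>i<j. g i)" for j
  have e01: "\<And>j. e j = 0 \<or> e j = 1" using e1 e2 unfolding e_def by (smt (verit) of_nat_add of_nat_le_iff of_nat_1)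
  have ed: "\<And>i. int (f i) - int (g i) = e (Suc i) - e i" unfolding e_def by simp
  define V where "V i = (\<Sum>k\<in>{i..<N}. \<bar>int (f k) - int (g k)\<bar>)" for i
  define X where "X i = (\<Sum>k\<in>{i..<N}. int (f k) + int (g k))" for i
  have main: "int (f i) + e i \<ge> V i \<and> int (g i) + 1 - e i \<ge> V i \<and> X i \<ge> (V i)^2" if "i \<le> N" for i
    using that
  proof (induction i rule: inc_induct)
    case base then show ?case using e01[of N] by (auto simp: V_def X_def)
  next
    case (step m)
    have V: "V m = \<bar>int (f m) - int (g m)\<bar> + V (Suc m)" unfolding V_def using step(2) by (simp add: sum.atLeast_Suc_lessThan)
    have X: "X m = int (f m) + int (g m) + X (Suc m)" unfolding X_def using step(2) by (simp add: sum.atLeast_Suc_lessThan)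
    have IH: "int (f (Suc m)) + e (Suc m) \<ge> V (Suc m)" "int (g (Suc m)) + 1 - e (Suc m) \<ge> V (Suc m)"
      "X (Suc m) \<ge> (V (Suc m))^2" using step(3) by auto
    have m1: "int (f (Suc m)) \<le> int (f m)" "int (g (Suc m)) \<le> int (g m)" using mf mg by auto
    have d: "int (f m) - int (g m) = e (Suc m) - e m" by (rule ed)
    have sq: "(V (Suc m) + 1)^2 = (V (Suc m))^2 + 2 * V (Suc m) + 1" by algebra
    consider "e m = 0" "e (Suc m) = 0" | "e m = 0" "e (Suc m) = 1" | "e m = 1" "e (Suc m) = 0" | "e m = 1" "e (Suc m) = 1"
      using e01[of m] e01[of "Suc m"] by blast
    then show ?case
    proof cases
      case 1 then show ?thesis using V X IH m1 d by auto
    next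
      case 2
      then have V': "V m = V (Suc m) + 1" using V d by simp
      show ?thesis using V' X IH m1 d 2 sq by auto
    next
      case 3
      then have V': "V m = V (Suc m) + 1" using V d by simp
      show ?thesis using V' X IH m1 d 3 sq by auto
    next
      case 4 then show ?thesis using V X IH m1 d by auto
    qed
  qed
  have "X 0 \<ge> (V 0)^2" using main[of 0] by simp
  moreover have "X 0 = 2 * int n" unfolding X_def using sf sg
    by (simp add: sum.distrib atLeast0LessThan flip: of_nat_sum)
  moreover have "V 0 = (\<Sum>i<N. \<bar>int (f i) - int (g i)\<bar>)" unfolding V_def by (simp add: atLeast0LessThan)
  ultimately show ?thesis by simp
qed

lemma one_line_props:
  assumes "p permutes {1..n}"
  shows "distinct (one_line n p)" "set (one_line n p) = {1..n}" "length (one_line n p) = n"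
proof -
  have "inj p" using permutes_inj[OF assms] .
  then show "distinct (one_line n p)" unfolding one_line_def by (simp add: distinct_map inj_on_subset)
  have "set (one_line n p) = p ` {1..n}" unfolding one_line_def by auto
  then show "set (one_line n p) = {1..n}" using permutes_image[OF assms] by simp
  show "length (one_line n p) = n" unfolding one_line_def by simp
qed

lemma shape_G:
  assumes "distinct w"
  shows "(\<Sum>k<j. part (map length (rsk_P w)) k) = G w j"
proof -
  have "G (reading (rsk_P w)) j = (\<Sum>k<j. part (map length (rsk_P w)) k)"
    by (rule G_tab[OF rsk_domc[OF assms] rsk_G(2)[OF assms]]) (use rsk_knuth[OF assms] in simp)
  then show ?thesis using rsk_G(1)[OF assms] by simp
qed

lemma shape_mono:
  assumes "distinct w"
  shows "part (map length (rsk_P w)) (Suc i) \<le> part (map length (rsk_P w)) i"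
proof (cases "Suc i < length (rsk_P w)")
  case True
  then have "dominates (rsk_P w ! i) (rsk_P w ! Suc i)" using domc_adj[OF rsk_domc[OF assms]] by simp
  then show ?thesis using True by (simp add: part_def dominates_def)
next
  case False then show ?thesis by (simp add: part_def)
qed

lemma shape_total:
  assumes "distinct w" "length (rsk_P w) \<le> M"
  shows "(\<Sum>k<M. part (map length (rsk_P w)) k) = length w"
proof -
  let ?T = "rsk_P w"
  have "(\<Sum>k<M. part (map length ?T) k) = (\<Sum>k<M. if k < length ?T then length (?T!k) else 0)"
    by (rule sum.cong) (auto simp: part_def)
  also have "\<dots> = (\<Sum>k\<in>{k\<in>{..<M}. k < length ?T}. length (?T!k))"
    by (rule sum.inter_filter[symmetric]) simp
  also have "{k\<in>{..<M}. k < length ?T} = {0..<length ?T}" using assms(2) by auto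
  also have "(\<Sum>k\<in>{0..<length ?T}. length (?T!k)) = sum_list (map length ?T)"
    by (simp add: sum_list_sum_nth)
  also have "\<dots> = length (concat ?T)" by (simp add: length_concat)
  also have "\<dots> = length (reading ?T)" by (simp add: reading_def)
  also have "\<dots> = length w"
    using rsk_G(2,3)[OF assms(1)] assms(1) by (metis distinct_card)
  finally show ?thesis .
qed

lemma Delta_sym: "Delta n a b = Delta n b a"
  unfolding Delta_def by (simp add: abs_minus_commute)

lemma Delta_tri: "Delta n a c \<le> Delta n a b + Delta n b c"
proof -
  have "(\<Sum>i<n. \<bar>real (part a i) - real (part c i)\<bar>) \<le>
        (\<Sum>i<n. \<bar>real (part a i) - real (part b i)\<bar> + \<bar>real (part b i) - real (part c i)\<bar>)"
    by (rule sum_mono) linarith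
  then show ?thesis unfolding Delta_def by (simp add: sum.distrib)
qed

lemma Delta_self: "Delta n a a = 0"
  unfolding Delta_def by simp

lemma one_step_aux:
  fixes f g :: "nat \<Rightarrow> nat"
  assumes mf: "\<And>i. f (Suc i) \<le> f i" and mg: "\<And>i. g (Suc i) \<le> g i"
    and e1: "\<And>j. (\<Sum>i<j. g i) \<le> (\<Sum>i<j. f i)" and e2: "\<And>j. (\<Sum>i<j. f i) \<le> (\<Sum>i<j. g i) + 1"
    and sf: "(\<Sum>i<N. f i) = n" and sg: "(\<Sum>i<N. g i) = n" and nN: "n \<le> N"
  shows "(\<Sum>i<n. \<bar>real (f i) - real (g i)\<bar>) / 2 \<le> sqrt (real n / 2)"
proof -
  have C: "(\<Sum>i<N. \<bar>int (f i) - int (g i)\<bar>)^2 \<le> 2 * int n" by (rule lemC[OF mf mg e1 e2 sf sg])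
  define D where "D = (\<Sum>i<n. \<bar>real (f i) - real (g i)\<bar>)"
  define V where "V = (\<Sum>i<N. \<bar>real (f i) - real (g i)\<bar>)"
  define Vi where "Vi = (\<Sum>i<N. \<bar>int (f i) - int (g i)\<bar>)"
  have VV: "V = real_of_int Vi" unfolding V_def Vi_def by (simp add: of_int_sum)
  have "real_of_int (Vi^2) \<le> real_of_int (2 * int n)" using C unfolding Vi_def by (simp only: of_int_le_iff)
  then have V2: "V^2 \<le> 2 * real n" unfolding VV by simp
  have D0: "0 \<le> D" unfolding D_def by (rule sum_nonneg) simp
  have "D \<le> V" unfolding D_def V_def by (rule sum_mono2) (use nN in \<open>simp_all\<close>)
  then have "D^2 \<le> V^2" using D0 by (simp add: power_mono)
  then have "(D/2)^2 \<le> real n / 2" using V2 by (simp add: power_divide)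
  then show ?thesis using real_le_rsqrt unfolding D_def by blast
qed

lemma one_step:
  assumes p: "p permutes {1..n}" and k: "1 \<le> k" "k \<le> n - 1"
  shows "Delta n (rsk_shape n p) (rsk_shape n (transpose k (Suc k) \<circ> p)) \<le> sqrt (real n / 2)"
proof -
  let ?t = "transpose k (Suc k)"
  define w where "w = one_line n p"
  have w': "one_line n (?t \<circ> p) = map ?t w" unfolding w_def one_line_def by simp
  have dw: "distinct w" "set w = {1..n}" "length w = n" using one_line_props[OF p] w_def by auto
  have kn: "k \<in> set w" "Suc k \<in> set w" using dw k by auto
  have dw': "distinct (map ?t w)" using dw(1) by (simp add: distinct_map inj_on_subset[OF inj_transpose])
  have lw': "length (map ?t w) = n" using dw by simp
  define f where "f = part (map length (rsk_P w))"
  define g where "g = part (map length (rsk_P (map ?t w)))"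
  have sh: "rsk_shape n p = map length (rsk_P w)" "rsk_shape n (?t \<circ> p) = map length (rsk_P (map ?t w))"
    unfolding rsk_shape_def by (simp_all only: w_def w')
  have Df: "Delta n (rsk_shape n p) (rsk_shape n (?t \<circ> p)) = (\<Sum>i<n. \<bar>real (f i) - real (g i)\<bar>) / 2"
    unfolding Delta_def sh f_def g_def by simp
  define N where "N = n + length (rsk_P w) + length (rsk_P (map ?t w))"
  have sf: "(\<Sum>i<N. f i) = n" unfolding f_def using shape_total[OF dw(1), of N] dw N_def by simp
  have sg: "(\<Sum>i<N. g i) = n" unfolding g_def using shape_total[OF dw', of N] lw' N_def by simp
  have mf: "\<And>i. f (Suc i) \<le> f i" unfolding f_def by (rule shape_mono[OF dw(1)])
  have mg: "\<And>i. g (Suc i) \<le> g i" unfolding g_def by (rule shape_mono[OF dw'])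
  have Gf: "\<And>j. (\<Sum>i<j. f i) = G w j" unfolding f_def by (rule shape_G[OF dw(1)])
  have Gg: "\<And>j. (\<Sum>i<j. g i) = G (map ?t w) j" unfolding g_def by (rule shape_G[OF dw'])
  have nN: "n \<le> N" unfolding N_def by simp
  from vswap[OF dw(1) kn] show ?thesis
  proof
    assume A: "\<forall>j. G (map ?t w) j \<le> G w j \<and> G w j \<le> G (map ?t w) j + 1"
    have "(\<Sum>i<n. \<bar>real (f i) - real (g i)\<bar>) / 2 \<le> sqrt (real n / 2)"
      by (rule one_step_aux[OF mf mg _ _ sf sg nN]) (use A Gf Gg in auto)
    then show ?thesis using Df by simp
  next
    assume B: "\<forall>j. G w j \<le> G (map ?t w) j \<and> G (map ?t w) j \<le> G w j + 1"
    have "(\<Sum>i<n. \<bar>real (g i) - real (f i)\<bar>) / 2 \<le> sqrt (real n / 2)"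
      by (rule one_step_aux[OF mg mf _ _ sg sf nN]) (use B Gf Gg in auto)
    then show ?thesis using Df by (simp add: abs_minus_commute)
  qed
qed

definition stepf :: "(nat \<Rightarrow> nat) \<Rightarrow> nat \<Rightarrow> nat \<Rightarrow> nat" where
  "stepf f k = transpose k (Suc k) \<circ> f"

lemma stepf_eq: "(\<lambda>f k. transpose k (Suc k) \<circ> f) = stepf"
  by (intro ext) (simp add: stepf_def)

lemma chain_bound:
  assumes "p permutes {1..n}" "\<forall>k\<in>set ks. 1 \<le> k \<and> k \<le> n - 1"
  shows "Delta n (rsk_shape n p) (rsk_shape n (foldl stepf p ks)) \<le> real (length ks) * sqrt (real n / 2)"
  using assms
proof (induction ks arbitrary: p)
  case Nil then show ?case by (simp add: Delta_self)
next
  case (Cons k ks)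
  have k: "1 \<le> k" "k \<le> n - 1" using Cons.prems by auto
  have tp: "transpose k (Suc k) \<circ> p permutes {1..n}"
    by (rule permutes_compose[OF Cons.prems(1) permutes_swap_id]) (use k in auto)
  have IH: "Delta n (rsk_shape n (transpose k (Suc k) \<circ> p)) (rsk_shape n (foldl stepf (transpose k (Suc k) \<circ> p) ks))
      \<le> real (length ks) * sqrt (real n / 2)"
  proof -
    have "\<forall>k\<in>set ks. 1 \<le> k \<and> k \<le> n - 1" using Cons.prems(2) by simp
    then show ?thesis using Cons.IH[OF tp] by blast
  qed
  have 1: "Delta n (rsk_shape n p) (rsk_shape n (transpose k (Suc k) \<circ> p)) \<le> sqrt (real n / 2)"
    by (rule one_step[OF Cons.prems(1) k])
  have "Delta n (rsk_shape n p) (rsk_shape n (foldl stepf p (k # ks))) \<le>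
      Delta n (rsk_shape n p) (rsk_shape n (transpose k (Suc k) \<circ> p)) +
      Delta n (rsk_shape n (transpose k (Suc k) \<circ> p)) (rsk_shape n (foldl stepf (transpose k (Suc k) \<circ> p) ks))"
    using Delta_tri by (simp add: stepf_def)
  also have "\<dots> \<le> sqrt (real n / 2) + real (length ks) * sqrt (real n / 2)" using 1 IH by linarith
  finally show ?case by (simp add: algebra_simps)
qed

lemma foldl_comp: "foldl stepf (h \<circ> p) ks = foldl stepf h ks \<circ> p"
proof (induction ks arbitrary: h)
  case Nil then show ?case by simp
next
  case (Cons a ks)
  have e: "stepf (h \<circ> p) a = stepf h a \<circ> p" by (simp add: stepf_def comp_assoc)
  have "foldl stepf (h \<circ> p) (a # ks) = foldl stepf (stepf (h \<circ> p) a) ks" by (simp only: foldl.simps)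
  also have "\<dots> = foldl stepf (stepf h a \<circ> p) ks" by (simp only: e)
  also have "\<dots> = foldl stepf (stepf h a) ks \<circ> p" by (rule Cons.IH)
  also have "\<dots> = foldl stepf h (a # ks) \<circ> p" by (simp only: foldl.simps)
  finally show ?case .
qed

lemma foldl_comp_id: "foldl stepf p ks = foldl stepf id ks \<circ> p"
  using foldl_comp[of id p ks] by simp

lemma conj_transp:
  assumes "a < b"
  shows "transpose b (Suc b) \<circ> transpose a b \<circ> transpose b (Suc b) = transpose a (Suc b)"
  using assms by (auto simp: fun_eq_iff transpose_def)

lemma adj_decomp:
  assumes "1 \<le> a" "a \<le> b" "b \<le> n"
  shows "\<exists>ks. (\<forall>k\<in>set ks. 1 \<le> k \<and> k \<le> n - 1) \<and> foldl stepf id ks = transpose a b"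
  using assms
proof (induction b)
  case 0 then show ?case by simp
next
  case (Suc b')
  show ?case
  proof (cases "a = Suc b'")
    case True then show ?thesis by (intro exI[of _ "[]"]) simp
  next
    case False
    then have ab: "a \<le> b'" using Suc.prems by simp
    show ?thesis
    proof (cases "a = b'")
      case True
      then show ?thesis using Suc.prems by (intro exI[of _ "[b']"]) (auto simp: stepf_def)
    next
      case False
      then have "a < b'" using ab by simp
      obtain ks where ks: "\<forall>k\<in>set ks. 1 \<le> k \<and> k \<le> n - 1" "foldl stepf id ks = transpose a b'"
        using Suc.IH[OF Suc.prems(1) ab] Suc.prems(3) by fastforce
      have "foldl stepf id ([b'] @ ks @ [b']) = stepf (foldl stepf (stepf id b') ks) b'" by simp
      also have "stepf id b' = transpose b' (Suc b')" by (simp add: stepf_def)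
      also have "foldl stepf (transpose b' (Suc b')) ks = transpose a b' \<circ> transpose b' (Suc b')"
        using foldl_comp_id[of "transpose b' (Suc b')" ks] ks(2) by simp
      also have "stepf (transpose a b' \<circ> transpose b' (Suc b')) b' = transpose b' (Suc b') \<circ> transpose a b' \<circ> transpose b' (Suc b')"
        by (simp add: stepf_def comp_assoc)
      also have "\<dots> = transpose a (Suc b')" by (rule conj_transp[OF \<open>a < b'\<close>])
      finally show ?thesis using ks(1) Suc.prems \<open>a < b'\<close>
        by (intro exI[of _ "[b'] @ ks @ [b']"]) auto
    qed
  qed
qed

lemma transp_decomp:
  assumes "a \<in> {1..n}" "b \<in> {1..n}"
  shows "\<exists>ks. (\<forall>k\<in>set ks. 1 \<le> k \<and> k \<le> n - 1) \<and> foldl stepf id ks = transpose a b"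
proof (cases "a \<le> b")
  case True then show ?thesis using adj_decomp assms by auto
next
  case False then show ?thesis using adj_decomp[of b a n] assms by (auto simp: transpose_commute)
qed

lemma perm_decomp:
  assumes "s permutes {1..n}"
  shows "\<exists>ks. (\<forall>k\<in>set ks. 1 \<le> k \<and> k \<le> n - 1) \<and> foldl stepf id ks = s"
  using assms finite_atLeastAtMost
proof (induction rule: permutes_induct)
  case id then show ?case by (intro exI[of _ "[]"]) simp
next
  case (swap a b p)
  obtain ks1 where k1: "\<forall>k\<in>set ks1. 1 \<le> k \<and> k \<le> n - 1" "foldl stepf id ks1 = p" using swap by blast
  obtain ks2 where k2: "\<forall>k\<in>set ks2. 1 \<le> k \<and> k \<le> n - 1" "foldl stepf id ks2 = transpose a b"
    using transp_decomp swap by blast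
  have "foldl stepf id (ks1 @ ks2) = foldl stepf p ks2" by (simp only: foldl_append k1(2))
  also have "\<dots> = foldl stepf id ks2 \<circ> p" by (rule foldl_comp_id)
  also have "\<dots> = transpose a b \<circ> p" by (simp only: k2(2))
  finally have eq: "foldl stepf id (ks1 @ ks2) = transpose a b \<circ> p" .
  show ?case
  proof (intro exI[of _ "ks1 @ ks2"] conjI)
    show "\<forall>k\<in>set (ks1 @ ks2). 1 \<le> k \<and> k \<le> n - 1" using k1(1) k2(1) by auto
  qed (rule eq)
qed

theorem theorem5:
  fixes n t :: nat and p q :: "nat \<Rightarrow> nat"
  assumes "p permutes {1..n}" and "q permutes {1..n}"
    and "adj_dist n p q = t"
  shows "Delta n (rsk_shape n p) (rsk_shape n q) \<le> real t * sqrt (real n / 2)"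
proof -
  have s: "q \<circ> inv p permutes {1..n}" using permutes_compose[OF permutes_inv[OF assms(1)] assms(2)] .
  obtain ks where ks: "\<forall>k\<in>set ks. 1 \<le> k \<and> k \<le> n - 1" "foldl stepf id ks = q \<circ> inv p"
    using perm_decomp[OF s] by blast
  have "foldl stepf p ks = q \<circ> inv p \<circ> p" using foldl_comp_id[of p ks] ks(2) by simp
  also have "\<dots> = q" using permutes_inv_o(2)[OF assms(1)] by (simp add: comp_assoc)
  finally have ex: "\<exists>m ks. length ks = m \<and> (\<forall>k\<in>set ks. 1 \<le> k \<and> k \<le> n - 1) \<and> foldl stepf p ks = q"
    using ks(1) by blast
  have "\<exists>ks. length ks = adj_dist n p q \<and> (\<forall>k\<in>set ks. 1 \<le> k \<and> k \<le> n - 1) \<and> foldl stepf p ks = q"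
    unfolding adj_dist_def stepf_eq by (rule LeastI_ex) (use ex in blast)
  then obtain ks' where ks': "length ks' = t" "\<forall>k\<in>set ks'. 1 \<le> k \<and> k \<le> n - 1" "foldl stepf p ks' = q"
    using assms(3) by blast
  show ?thesis using chain_bound[OF assms(1) ks'(2)] ks' by simp
qed

end
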